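(* Let $n>r$ and let $1_r:=1_{(1,\dots,1,0,\dots,0)}$ ($r$ ones followed by $n-r$ zeros). Let $A$ be a $\mathbb{Q}(q)$-algebra and $f\colon\hat S(n,r)\to A$ a surjective $\mathbb{Q}(q)$-algebra homomorphism whose restriction to $1_r\hat S(n,r)1_r$ is injective. Then $f$ is an isomorphism of $\mathbb{Q}(q)$-algebras $\hat S(n,r)\cong A$.
   Context: Fix integers $n\ge3$, $r\ge3$; indices are read modulo $n$. $\hat U=\hat{\mathbf U}_q(\hat{\mathfrak{gl}}_n)$ is the associative unital $\mathbb{Q}(q)$-algebra generated by $R^{\pm1}$, $K_i^{\pm1}$, $E_i$, $E_{-i}$ ($1\le i\le n$) subject to: the $K_i^{\pm1}$ pairwise commute and $K_iK_i^{-1}=K_i^{-1}K_i=1$; $E_iE_{-j}-E_{-j}E_i=\delta_{ij}\frac{K_iK_{i+1}^{-1}-K_i^{-1}K_{i+1}}{q-q^{-1}}$; $K_iE_{\pm j}=q^{\pm(\delta_{i,j}-\delta_{i,j+1})}E_{\pm j}K_i$; for $\epsilon,\delta\in\{1,-1\}$, $E_{\epsilon i}^2E_{\epsilon(i+\delta)}-(q+q^{-1})E_{\epsilon i}E_{\epsilon(i+\delta)}E_{\epsilon i}+E_{\epsilon(i+\delta)}E_{\epsilon i}^2=0$; $E_{\epsilon i}E_{\epsilon j}=E_{\epsilon j}E_{\epsilon i}$ if $j\not\equiv i\pm1\pmod n$; $RR^{-1}=R^{-1}R=1$; $RXR^{-1}=X'$ for $(X,X')\in\{(E_i,E_{i+1}),(E_{-i},E_{-(i+1)}),(K_i^{-1},K_{i+1}^{-1})\}$.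 The coproduct $\Delta$ is the algebra map with $\Delta(E_i)=E_i\otimes K_iK_{i+1}^{-1}+1\otimes E_i$, $\Delta(E_{-i})=K_i^{-1}K_{i+1}\otimes E_{-i}+E_{-i}\otimes1$, $\Delta(K_i^{\pm1})=K_i^{\pm1}\otimes K_i^{\pm1}$, $\Delta(R^{\pm1})=R^{\pm1}\otimes R^{\pm1}$. $V$ is the $\mathbb{Q}(q)$-vector space with basis $\{e_t\}_{t\in\mathbb{Z}}$, a $\hat U$-module via: $E_ie_{t+1}=e_t$ if $i\equiv t\pmod n$ and $0$ otherwise; $E_{-i}e_t=e_{t+1}$ if $i\equiv t\pmod n$ and $0$ otherwise; $K_i^{\pm1}e_t=q^{\pm1}e_t$ if $i\equiv t\pmod n$ and $e_t$ otherwise; $R^{\pm1}e_t=e_{t\pm1}$; $\hat U$ acts on $V^{\otimes r}$ via the iterated coproduct, giving $\psi_{n,r}\colon\hat U\to\mathrm{End}_{\mathbb{Q}(q)}(V^{\otimes r})$. The affine $q$-Schur algebra is $\hat S(n,r):=\psi_{n,r}(\hat U)$ (by affine Schur–Weyl duality this equals the centralizer of the natural right action of the extended affine Hecke algebra of type $\hat A_{r-1}$ on $V^{\otimes r}$). $\Lambda(n,r)=\{\lambda\in\mathbb{N}^n:\sum_i\lambda_i=r\}$; for $\lambda\in\Lambda(n,r)$, $1_\lambda\in\hat S(n,r)$ is the projection of $V^{\otimes r}$ onto the span of those $e_{t_1}\otimes\cdots\otimes e_{t_r}$ with $\#\{j: t_j\equiv i\pmod n\}=\lambda_i$ for all $i$.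 *)

theory Defs
  imports "HOL-Computational_Algebra.Polynomial" "HOL-Computational_Algebra.Fraction_Field"
begin

type_synonym K = "rat poly fract"

definition qq :: K where "qq = Fract [:0, 1:] 1"

text \<open>A vector of V^{\<otimes> r} is a finitely supported coefficient function on basis tuples
  e_{t_1} \<otimes> ... \<otimes> e_{t_r}, a tuple being an int list of length r.  Operators are maps
  on such coefficient functions; they are all taken to be 0 outside the space V^{\<otimes> r}.\<close>

type_synonym vec = "int list \<Rightarrow> K"
type_synonym op = "vec \<Rightarrow> vec"

definition tvecs :: "nat \<Rightarrow> vec set" where
  "tvecs r = {v. finite {t. v t \<noteq> 0} \<and> (\<forall>t. v t \<noteq> 0 \<longrightarrow> length t = r)}"

text \<open>Linear operator with matrix M: M s t is the coefficient of e_s in the image of e_t.\<close>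
definition mat_op :: "nat \<Rightarrow> (int list \<Rightarrow> int list \<Rightarrow> K) \<Rightarrow> op" where
  "mat_op r M v = (if v \<in> tvecs r
      then (\<lambda>s. if length s = r then (\<Sum>t\<in>{t. v t \<noteq> 0}. M s t * v t) else 0)
      else (\<lambda>_. 0))"

definition cng :: "nat \<Rightarrow> int \<Rightarrow> int \<Rightarrow> bool" where
  "cng n a b \<longleftrightarrow> a mod int n = b mod int n"

definition sId :: "int \<Rightarrow> int \<Rightarrow> K" where
  "sId s t = (if s = t then 1 else 0)"

text \<open>E_i e_{t+1} = e_t if i \<equiv> t (mod n)\<close>
definition sE :: "nat \<Rightarrow> int \<Rightarrow> int \<Rightarrow> int \<Rightarrow> K" where
  "sE n i s t = (if t = s + 1 \<and> cng n i s then 1 else 0)"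

text \<open>E_{-i} e_t = e_{t+1} if i \<equiv> t (mod n)\<close>
definition sF :: "nat \<Rightarrow> int \<Rightarrow> int \<Rightarrow> int \<Rightarrow> K" where
  "sF n i s t = (if s = t + 1 \<and> cng n i t then 1 else 0)"

text \<open>K_i^{e} (e = 1 or -1): e_t \<mapsto> q^e e_t if i \<equiv> t, else e_t\<close>
definition sK :: "nat \<Rightarrow> int \<Rightarrow> int \<Rightarrow> int \<Rightarrow> int \<Rightarrow> K" where
  "sK n i e s t = (if s = t then (if cng n i t then qq powi e else 1) else 0)"

definition sKt :: "nat \<Rightarrow> int \<Rightarrow> int \<Rightarrow> int \<Rightarrow> int \<Rightarrow> K" where
  "sKt n i e s t = sK n i e s t * sK n (i + 1) (- e) s t"

definition sR :: "int \<Rightarrow> int \<Rightarrow> int \<Rightarrow> K" where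
  "sR d s t = (if s = t + d then 1 else 0)"

text \<open>Matrix coefficient of a pure tensor X_0 \<otimes> ... \<otimes> X_{r-1} of single-factor operators.\<close>
definition tprod :: "nat \<Rightarrow> (nat \<Rightarrow> int \<Rightarrow> int \<Rightarrow> K) \<Rightarrow> int list \<Rightarrow> int list \<Rightarrow> K" where
  "tprod r F s t = (\<Prod>k<r. F k (s ! k) (t ! k))"

text \<open>Delta^{(r)}(E_i) = \<Sum>_j 1^{\<otimes> j} \<otimes> E_i \<otimes> (K_i K_{i+1}^{-1})^{\<otimes>(r-1-j)}\<close>
definition psiE :: "nat \<Rightarrow> nat \<Rightarrow> int \<Rightarrow> op" where
  "psiE n r i = mat_op r (\<lambda>s t. \<Sum>j<r. tprod r
      (\<lambda>k. if k < j then sId else if k = j then sE n i else sKt n i 1) s t)"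

text \<open>Delta^{(r)}(E_{-i}) = \<Sum>_j (K_i^{-1} K_{i+1})^{\<otimes> j} \<otimes> E_{-i} \<otimes> 1^{\<otimes>(r-1-j)}\<close>
definition psiF :: "nat \<Rightarrow> nat \<Rightarrow> int \<Rightarrow> op" where
  "psiF n r i = mat_op r (\<lambda>s t. \<Sum>j<r. tprod r
      (\<lambda>k. if k < j then sKt n i (-1) else if k = j then sF n i else sId) s t)"

definition psiK :: "nat \<Rightarrow> nat \<Rightarrow> int \<Rightarrow> int \<Rightarrow> op" where
  "psiK n r i e = mat_op r (tprod r (\<lambda>k. sK n i e))"

definition psiR :: "nat \<Rightarrow> int \<Rightarrow> op" where
  "psiR r d = mat_op r (tprod r (\<lambda>k. sR d))"

definition psiId :: "nat \<Rightarrow> op" where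
  "psiId r = mat_op r (tprod r (\<lambda>k. sId))"

definition gens :: "nat \<Rightarrow> nat \<Rightarrow> op set" where
  "gens n r =
     {psiE n r i | i. i \<in> {1..int n}} \<union> {psiF n r i | i. i \<in> {1..int n}}
   \<union> {psiK n r i e | i e. i \<in> {1..int n} \<and> e \<in> {1, -1}}
   \<union> {psiR r d | d. d \<in> {1, -1}}"

inductive_set affSchur :: "nat \<Rightarrow> nat \<Rightarrow> op set" for n r where
  gen: "X \<in> gens n r \<Longrightarrow> X \<in> affSchur n r"
| one: "psiId r \<in> affSchur n r"
| add: "X \<in> affSchur n r \<Longrightarrow> Y \<in> affSchur n r \<Longrightarrow> (\<lambda>v s. X v s + Y v s) \<in> affSchur n r"
| smult: "X \<in> affSchur n r \<Longrightarrow> (\<lambda>v s. c * X v s) \<in> affSchur n r"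
| mult: "X \<in> affSchur n r \<Longrightarrow> Y \<in> affSchur n r \<Longrightarrow> X \<circ> Y \<in> affSchur n r"

text \<open>1_lambda for lambda \<in> Lambda(n,r) (lambda given as a function on residues 1..n)\<close>
definition wtproj :: "nat \<Rightarrow> nat \<Rightarrow> (int \<Rightarrow> nat) \<Rightarrow> op" where
  "wtproj n r lam = mat_op r (\<lambda>s t. if s = t \<and>
      (\<forall>i\<in>{1..int n}. card {j. j < r \<and> cng n (t ! j) i} = lam i) then 1 else 0)"

definition one_r :: "nat \<Rightarrow> nat \<Rightarrow> op" where
  "one_r n r = wtproj n r (\<lambda>i. if i \<le> int r then 1 else 0)"

definition qalg :: "(K \<Rightarrow> 'a::ring_1 \<Rightarrow> 'a) \<Rightarrow> bool" where
  "qalg sA \<longleftrightarrow>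
     (\<forall>c x y. sA c (x + y) = sA c x + sA c y) \<and>
     (\<forall>c d x. sA (c + d) x = sA c x + sA d x) \<and>
     (\<forall>c d x. sA (c * d) x = sA c (sA d x)) \<and>
     (\<forall>x. sA 1 x = x) \<and>
     (\<forall>c x y. sA c (x * y) = sA c x * y) \<and>
     (\<forall>c x y. sA c (x * y) = x * sA c y)"

definition qalg_hom_on :: "op set \<Rightarrow> (K \<Rightarrow> 'a::ring_1 \<Rightarrow> 'a) \<Rightarrow> (op \<Rightarrow> 'a) \<Rightarrow> bool" where
  "qalg_hom_on S sA f \<longleftrightarrow>
     (\<forall>X\<in>S. \<forall>Y\<in>S. f (\<lambda>v s. X v s + Y v s) = f X + f Y) \<and>
     (\<forall>X\<in>S. \<forall>Y\<in>S. f (X \<circ> Y) = f X * f Y) \<and>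
     (\<forall>c. \<forall>X\<in>S. f (\<lambda>v s. c * X v s) = sA c (f X))"

end

theory Submission
  imports Defs
begin


definition supp :: "vec \<Rightarrow> int list set" where "supp v = {t. v t \<noteq> 0}"

definition good :: "nat \<Rightarrow> (int list \<Rightarrow> int list \<Rightarrow> K) \<Rightarrow> bool" where
  "good r M \<longleftrightarrow> (\<exists>B. \<forall>s t. length s = r \<longrightarrow> length t = r \<longrightarrow> M s t \<noteq> 0 \<longrightarrow> (\<forall>k<r. \<bar>s!k - t!k\<bar> \<le> B))"

definition box :: "nat \<Rightarrow> int list \<Rightarrow> int \<Rightarrow> int list set" where
  "box r t B = {s. length s = r \<and> (\<forall>k<r. \<bar>s!k - t!k\<bar> \<le> B)}"

lemma finite_box: assumes "length t = r" shows "finite (box r t B)"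
proof -
  define C where "C = B + (\<Sum>k<r. \<bar>t!k\<bar>)"
  have "box r t B \<subseteq> {s. set s \<subseteq> {-C..C} \<and> length s = r}"
  proof
    fix s assume s: "s \<in> box r t B"
    have "set s \<subseteq> {-C..C}"
    proof
      fix x assume "x \<in> set s"
      then obtain k where k: "k < r" "s!k = x" using s by (auto simp: box_def in_set_conv_nth)
      have "\<bar>t!k\<bar> \<le> (\<Sum>k<r. \<bar>t!k\<bar>)"
        by (rule member_le_sum[where f="\<lambda>k. \<bar>t!k\<bar>"]) (use k in auto)
      moreover have "\<bar>x - t!k\<bar> \<le> B" using s k by (auto simp: box_def)
      ultimately show "x \<in> {-C..C}" unfolding C_def by auto
    qed
    then show "s \<in> {s. set s \<subseteq> {-C..C} \<and> length s = r}" using s by (auto simp: box_def)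
  qed
  moreover have "finite {s. set s \<subseteq> {-C..C} \<and> length s = r}"
    by (rule finite_lists_length_eq) auto
  ultimately show ?thesis by (rule finite_subset)
qed

definition col :: "nat \<Rightarrow> (int list \<Rightarrow> int list \<Rightarrow> K) \<Rightarrow> int list \<Rightarrow> int list set" where
  "col r M t = {s. length s = r \<and> M s t \<noteq> 0}"

lemma finite_col: assumes "good r M" "length t = r" shows "finite (col r M t)"
proof -
  obtain B where B: "\<forall>s t. length s = r \<longrightarrow> length t = r \<longrightarrow> M s t \<noteq> 0 \<longrightarrow> (\<forall>k<r. \<bar>s!k - t!k\<bar> \<le> B)"
    using assms(1) unfolding good_def by blast
  have "col r M t \<subseteq> box r t B" using B assms(2) by (auto simp: col_def box_def)
  thus ?thesis using finite_box[OF assms(2)] finite_subset by blast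
qed

definition mmul :: "nat \<Rightarrow> (int list \<Rightarrow> int list \<Rightarrow> K) \<Rightarrow> (int list \<Rightarrow> int list \<Rightarrow> K) \<Rightarrow> int list \<Rightarrow> int list \<Rightarrow> K" where
  "mmul r M N s t = (\<Sum>u\<in>col r N t. M s u * N u t)"

lemma tvecsD: "v \<in> tvecs r \<Longrightarrow> finite (supp v) \<and> (\<forall>t\<in>supp v. length t = r)"
  by (auto simp: tvecs_def supp_def)

lemma mat_op_tv: "v \<in> tvecs r \<Longrightarrow> mat_op r M v = (\<lambda>s. if length s = r then (\<Sum>t\<in>supp v. M s t * v t) else 0)"
  unfolding mat_op_def supp_def by simp

lemma mat_op_ntv: "v \<notin> tvecs r \<Longrightarrow> mat_op r M v = (\<lambda>_. 0)"
  by (simp add: mat_op_def)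

lemma zero_tvecs: "(\<lambda>_. 0) \<in> tvecs r" by (simp add: tvecs_def)

lemma supp_zero: "supp (\<lambda>_. 0) = {}" by (simp add: supp_def)

lemma mat_op_zero: "mat_op r M (\<lambda>_. 0) = (\<lambda>_. 0)"
  unfolding mat_op_def tvecs_def by auto

lemma mat_op_in_tvecs: assumes "good r M" "v \<in> tvecs r" shows "mat_op r M v \<in> tvecs r"
proof -
  have fv: "finite (supp v)" and lv: "\<forall>t\<in>supp v. length t = r" using tvecsD[OF assms(2)] by auto
  let ?w = "mat_op r M v"
  have "{s. ?w s \<noteq> 0} \<subseteq> (\<Union>t\<in>supp v. col r M t)"
  proof
    fix s assume "s \<in> {s. ?w s \<noteq> 0}"
    hence ls: "length s = r" and "(\<Sum>t\<in>supp v. M s t * v t) \<noteq> 0"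
      by (auto simp: mat_op_tv[OF assms(2)] split: if_splits)
    then obtain t where "t \<in> supp v" "M s t * v t \<noteq> 0" by (meson sum.neutral)
    thus "s \<in> (\<Union>t\<in>supp v. col r M t)" using ls by (auto simp: col_def)
  qed
  moreover have "finite (\<Union>t\<in>supp v. col r M t)" using fv lv finite_col[OF assms(1)] by auto
  ultimately have "finite {s. ?w s \<noteq> 0}" by (rule finite_subset)
  moreover have "\<forall>s. ?w s \<noteq> 0 \<longrightarrow> length s = r" by (auto simp: mat_op_tv[OF assms(2)])
  ultimately show ?thesis by (simp add: tvecs_def)
qed

lemma good_mmul: assumes "good r M" "good r N" shows "good r (mmul r M N)"
proof -
  obtain B1 where B1: "\<forall>s t. length s = r \<longrightarrow> length t = r \<longrightarrow> M s t \<noteq> 0 \<longrightarrow> (\<forall>k<r. \<bar>s!k - t!k\<bar> \<le> B1)"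
    using assms(1) unfolding good_def by blast
  obtain B2 where B2: "\<forall>s t. length s = r \<longrightarrow> length t = r \<longrightarrow> N s t \<noteq> 0 \<longrightarrow> (\<forall>k<r. \<bar>s!k - t!k\<bar> \<le> B2)"
    using assms(2) unfolding good_def by blast
  show ?thesis unfolding good_def
  proof (intro exI allI impI)
    fix s t k assume ls: "length s = r" and lt: "length t = r" and nz: "mmul r M N s t \<noteq> 0" and k: "k < r"
    then obtain u where u: "u \<in> col r N t" "M s u * N u t \<noteq> 0" unfolding mmul_def by (meson sum.neutral)
    hence "\<bar>s!k - u!k\<bar> \<le> B1" "\<bar>u!k - t!k\<bar> \<le> B2" using B1 B2 ls lt k by (auto simp: col_def)
    thus "\<bar>s!k - t!k\<bar> \<le> B1 + B2" by linarith
  qed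
qed

lemma mat_op_comp: assumes "good r M" "good r N"
  shows "mat_op r M \<circ> mat_op r N = mat_op r (mmul r M N)"
proof
  fix v
  show "(mat_op r M \<circ> mat_op r N) v = mat_op r (mmul r M N) v"
  proof (cases "v \<in> tvecs r")
    case False thus ?thesis by (simp add: mat_op_ntv mat_op_zero)
  next
    case True
    have fv: "finite (supp v)" and lv: "\<forall>t\<in>supp v. length t = r" using tvecsD[OF True] by auto
    define w where "w = mat_op r N v"
    have wt: "w \<in> tvecs r" using mat_op_in_tvecs[OF assms(2) True] by (simp add: w_def)
    define U where "U = (\<Union>t\<in>supp v. col r N t)"
    have fU: "finite U" using fv lv finite_col[OF assms(2)] by (auto simp: U_def)
    have lU: "\<forall>u\<in>U. length u = r" by (auto simp: U_def col_def)
    have wu: "\<And>u. u \<in> U \<Longrightarrow> w u = (\<Sum>t\<in>supp v. N u t * v t)"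
      using lU by (simp add: w_def mat_op_tv[OF True])
    have sw: "supp w \<subseteq> U"
    proof
      fix u assume "u \<in> supp w"
      hence lu: "length u = r" and "(\<Sum>t\<in>supp v. N u t * v t) \<noteq> 0"
        by (auto simp: supp_def w_def mat_op_tv[OF True] split: if_splits)
      then obtain t where "t \<in> supp v" "N u t * v t \<noteq> 0" by (meson sum.neutral)
      thus "u \<in> U" using lu by (auto simp: U_def col_def)
    qed
    show ?thesis
    proof
      fix s
      show "(mat_op r M \<circ> mat_op r N) v s = mat_op r (mmul r M N) v s"
      proof (cases "length s = r")
        case False
        have "(mat_op r M \<circ> mat_op r N) v s = mat_op r M w s" by (simp add: w_def)
        thus ?thesis using False by (simp add: mat_op_tv[OF True] mat_op_tv[OF wt])
      next
        case ls: True
        have "(mat_op r M \<circ> mat_op r N) v s = (\<Sum>u\<in>supp w. M s u * w u)"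
          using ls by (simp add: mat_op_tv[OF wt] w_def[symmetric])
        also have "\<dots> = (\<Sum>u\<in>U. M s u * w u)"
          by (rule sum.mono_neutral_left[OF fU sw]) (auto simp: supp_def)
        also have "\<dots> = (\<Sum>u\<in>U. \<Sum>t\<in>supp v. M s u * N u t * v t)"
          by (rule sum.cong) (auto simp: wu sum_distrib_left mult.assoc)
        also have "\<dots> = (\<Sum>t\<in>supp v. \<Sum>u\<in>U. M s u * N u t * v t)" by (rule sum.swap)
        also have "\<dots> = (\<Sum>t\<in>supp v. mmul r M N s t * v t)"
        proof (rule sum.cong[OF refl])
          fix t assume t: "t \<in> supp v"
          have cU: "col r N t \<subseteq> U" using t by (auto simp: U_def)
          have "(\<Sum>u\<in>U. M s u * N u t * v t) = (\<Sum>u\<in>col r N t. M s u * N u t * v t)"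
            by (rule sum.mono_neutral_right[OF fU cU]) (use lU in \<open>auto simp: col_def\<close>)
          thus "(\<Sum>u\<in>U. M s u * N u t * v t) = mmul r M N s t * v t"
            by (simp add: mmul_def sum_distrib_right)
        qed
        also have "\<dots> = mat_op r (mmul r M N) v s" using ls by (simp add: mat_op_tv[OF True])
        finally show ?thesis .
      qed
    qed
  qed
qed

definition delta :: "int list \<Rightarrow> vec" where "delta t = (\<lambda>x. if x = t then 1 else 0)"

lemma delta_tvecs: "length t = r \<Longrightarrow> delta t \<in> tvecs r"
  by (auto simp: tvecs_def delta_def)

lemma mat_op_delta: assumes "length t = r" "length s = r" shows "mat_op r M (delta t) s = M s t"
proof -
  have "supp (delta t) = {t}" by (auto simp: supp_def delta_def)
  hence "mat_op r M (delta t) s = M s t * delta t t" using assms by (simp add: mat_op_tv[OF delta_tvecs[OF assms(1)]])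
  thus ?thesis by (simp add: delta_def)
qed

lemma mat_op_eq_iff: "mat_op r M = mat_op r N \<longleftrightarrow> (\<forall>s t. length s = r \<longrightarrow> length t = r \<longrightarrow> M s t = N s t)"
proof
  assume "mat_op r M = mat_op r N"
  thus "\<forall>s t. length s = r \<longrightarrow> length t = r \<longrightarrow> M s t = N s t" by (metis mat_op_delta)
next
  assume h: "\<forall>s t. length s = r \<longrightarrow> length t = r \<longrightarrow> M s t = N s t"
  show "mat_op r M = mat_op r N"
  proof
    fix v show "mat_op r M v = mat_op r N v"
    proof (cases "v \<in> tvecs r")
      case True
      have "\<forall>t\<in>supp v. length t = r" using tvecsD[OF True] by auto
      thus ?thesis using h by (auto simp: mat_op_tv[OF True] intro!: sum.cong)
    qed (simp add: mat_op_ntv)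
  qed
qed

lemma mat_op_add: "(\<lambda>v s. mat_op r M v s + mat_op r N v s) = mat_op r (\<lambda>s t. M s t + N s t)"
  by (auto simp: mat_op_def sum.distrib distrib_right intro!: ext)

lemma mat_op_smult: "(\<lambda>v s. c * mat_op r M v s) = mat_op r (\<lambda>s t. c * M s t)"
  by (auto simp: mat_op_def sum_distrib_left mult.assoc intro!: ext)

lemma good_add: assumes "good r M" "good r N" shows "good r (\<lambda>s t. M s t + N s t)"
proof -
  obtain B1 where B1: "\<forall>s t. length s = r \<longrightarrow> length t = r \<longrightarrow> M s t \<noteq> 0 \<longrightarrow> (\<forall>k<r. \<bar>s!k - t!k\<bar> \<le> B1)"
    using assms(1) unfolding good_def by blast
  obtain B2 where B2: "\<forall>s t. length s = r \<longrightarrow> length t = r \<longrightarrow> N s t \<noteq> 0 \<longrightarrow> (\<forall>k<r. \<bar>s!k - t!k\<bar> \<le> B2)"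
    using assms(2) unfolding good_def by blast
  show ?thesis unfolding good_def
  proof (intro exI allI impI)
    fix s t k assume "length s = r" "length t = r" "M s t + N s t \<noteq> 0" "k < r"
    thus "\<bar>s!k - t!k\<bar> \<le> max B1 B2" using B1 B2
      by (cases "M s t = 0") (fastforce intro: max.coboundedI1 max.coboundedI2)+
  qed
qed

lemma good_smult: "good r M \<Longrightarrow> good r (\<lambda>s t. c * M s t)"
  unfolding good_def by auto



definition ME :: "nat \<Rightarrow> nat \<Rightarrow> int \<Rightarrow> int list \<Rightarrow> int list \<Rightarrow> K" where
  "ME n r i = (\<lambda>s t. \<Sum>j<r. tprod r (\<lambda>k. if k < j then sId else if k = j then sE n i else sKt n i 1) s t)"
definition MF :: "nat \<Rightarrow> nat \<Rightarrow> int \<Rightarrow> int list \<Rightarrow> int list \<Rightarrow> K" where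
  "MF n r i = (\<lambda>s t. \<Sum>j<r. tprod r (\<lambda>k. if k < j then sKt n i (-1) else if k = j then sF n i else sId) s t)"
definition MK :: "nat \<Rightarrow> nat \<Rightarrow> int \<Rightarrow> int \<Rightarrow> int list \<Rightarrow> int list \<Rightarrow> K" where
  "MK n r i e = tprod r (\<lambda>k. sK n i e)"
definition MR :: "nat \<Rightarrow> int \<Rightarrow> int list \<Rightarrow> int list \<Rightarrow> K" where
  "MR r d = tprod r (\<lambda>k. sR d)"
definition MI :: "nat \<Rightarrow> int list \<Rightarrow> int list \<Rightarrow> K" where
  "MI r = tprod r (\<lambda>k. sId)"

lemma psiE_eq: "psiE n r i = mat_op r (ME n r i)" unfolding psiE_def ME_def ..
lemma psiF_eq: "psiF n r i = mat_op r (MF n r i)" unfolding psiF_def MF_def ..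
lemma psiK_eq: "psiK n r i e = mat_op r (MK n r i e)" unfolding psiK_def MK_def ..
lemma psiR_eq: "psiR r d = mat_op r (MR r d)" unfolding psiR_def MR_def ..
lemma psiId_eq: "psiId r = mat_op r (MI r)" unfolding psiId_def MI_def ..

definition band :: "(int \<Rightarrow> int \<Rightarrow> K) \<Rightarrow> bool" where
  "band F \<longleftrightarrow> (\<forall>a b. F a b \<noteq> 0 \<longrightarrow> \<bar>a - b\<bar> \<le> 1)"

lemma tprod_nz: "tprod r F s t \<noteq> 0 \<Longrightarrow> k < r \<Longrightarrow> F k (s!k) (t!k) \<noteq> 0"
  unfolding tprod_def by (metis finite_lessThan lessThan_iff prod_zero_iff)

lemma good_tprod: "(\<And>k. band (F k)) \<Longrightarrow> good r (tprod r F)"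
  unfolding good_def band_def by (metis tprod_nz)

lemma good_zero: "good r (\<lambda>s t. 0)" unfolding good_def by auto

lemma good_sum: "finite J \<Longrightarrow> (\<And>j. j \<in> J \<Longrightarrow> good r (M j)) \<Longrightarrow> good r (\<lambda>s t. \<Sum>j\<in>J. M j s t)"
proof (induction J rule: finite_induct)
  case empty thus ?case by (simp add: good_zero)
next
  case (insert x F)
  have "good r (\<lambda>s t. M x s t + (\<Sum>j\<in>F. M j s t))"
    by (rule good_add) (use insert in auto)
  thus ?case using insert by simp
qed

lemma band_sId: "band sId" by (simp add: band_def sId_def)
lemma band_sE: "band (sE n i)" by (simp add: band_def sE_def)
lemma band_sF: "band (sF n i)" by (simp add: band_def sF_def)
lemma band_sK: "band (sK n i e)" by (simp add: band_def sK_def)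
lemma band_sKt: "band (sKt n i e)" by (simp add: band_def sKt_def sK_def)
lemma band_sR: "d \<in> {1,-1} \<Longrightarrow> band (sR d)" by (auto simp: band_def sR_def)

lemma good_ME: "good r (ME n r i)"
  unfolding ME_def by (intro good_sum good_tprod) (auto simp: band_sId band_sE band_sKt)
lemma good_MF: "good r (MF n r i)"
  unfolding MF_def by (intro good_sum good_tprod) (auto simp: band_sId band_sF band_sKt)
lemma good_MK: "good r (MK n r i e)"
  unfolding MK_def by (intro good_tprod) (auto simp: band_sK)
lemma good_MR: "d \<in> {1,-1} \<Longrightarrow> good r (MR r d)"
  unfolding MR_def by (intro good_tprod) (auto simp: band_sR)
lemma good_MI: "good r (MI r)"
  unfolding MI_def by (intro good_tprod) (auto simp: band_sId)

definition diagm :: "nat \<Rightarrow> (int list \<Rightarrow> int list \<Rightarrow> K) \<Rightarrow> bool" where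
  "diagm r D \<longleftrightarrow> (\<forall>s u. length s = r \<longrightarrow> length u = r \<longrightarrow> s \<noteq> u \<longrightarrow> D s u = 0)"

lemma tprod_diag: assumes "\<And>k a b. a \<noteq> b \<Longrightarrow> F k a b = 0" shows "diagm r (tprod r F)"
  unfolding diagm_def
proof (intro allI impI)
  fix s u :: "int list" assume "length s = r" "length u = r" "s \<noteq> u"
  then obtain k where "k < r" "s!k \<noteq> u!k" by (metis nth_equalityI)
  thus "tprod r F s u = 0" using tprod_nz assms by blast
qed

lemma diag_MK: "diagm r (MK n r i e)" unfolding MK_def by (rule tprod_diag) (simp add: sK_def)
lemma diag_MI: "diagm r (MI r)" unfolding MI_def by (rule tprod_diag) (simp add: sId_def)

lemma mmul_diag_left: assumes "diagm r D" "length s = r" "length t = r" "good r N"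
  shows "mmul r D N s t = D s s * N s t"
proof (cases "N s t = 0")
  case True
  have "\<forall>u\<in>col r N t. D s u * N u t = 0" using assms True unfolding diagm_def col_def by auto
  thus ?thesis using True by (auto simp: mmul_def intro!: sum.neutral)
next
  case False
  hence s: "s \<in> col r N t" using assms by (simp add: col_def)
  have "mmul r D N s t = (\<Sum>u\<in>col r N t. if u = s then D s s * N s t else 0)"
    unfolding mmul_def using assms(1,2) by (intro sum.cong) (auto simp: diagm_def col_def)
  also have "\<dots> = D s s * N s t" using s finite_col[OF assms(4,3)] by (simp add: sum.delta')
  finally show ?thesis .
qed

lemma mmul_diag_right: assumes "diagm r D" "length s = r" "length t = r"
  shows "mmul r N D s t = N s t * D t t"
proof -
  have "col r D t \<subseteq> {t}" using assms unfolding diagm_def col_def by auto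
  hence "col r D t = {} \<or> col r D t = {t}" by blast
  thus ?thesis
  proof
    assume "col r D t = {}" hence "D t t = 0" using assms by (auto simp: col_def)
    thus ?thesis using \<open>col r D t = {}\<close> by (simp add: mmul_def)
  qed (simp add: mmul_def)
qed

lemma mmul_eq_sum: assumes "finite U" "\<forall>u\<in>U. length u = r"
  "\<And>u. length u = r \<Longrightarrow> M s u * N u t \<noteq> 0 \<Longrightarrow> u \<in> U" "good r N" "length t = r"
  shows "mmul r M N s t = (\<Sum>u\<in>U. M s u * N u t)"
proof -
  have "mmul r M N s t = (\<Sum>u\<in>U \<union> col r N t. M s u * N u t)"
    unfolding mmul_def
    by (rule sum.mono_neutral_left) (use assms finite_col in \<open>auto simp: col_def\<close>)
  also have "\<dots> = (\<Sum>u\<in>U. M s u * N u t)"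
    by (rule sum.mono_neutral_right) (use assms finite_col in \<open>auto simp: col_def\<close>)
  finally show ?thesis .
qed

definition transp :: "nat \<Rightarrow> (int list \<Rightarrow> int list \<Rightarrow> K) \<Rightarrow> (int list \<Rightarrow> int list \<Rightarrow> K) \<Rightarrow> bool" where
  "transp r M' M \<longleftrightarrow> (\<forall>s t. length s = r \<longrightarrow> length t = r \<longrightarrow> M' s t = M t s)"

lemma good_transp: "good r M \<Longrightarrow> transp r M' M \<Longrightarrow> good r M'"
  unfolding good_def transp_def by (metis abs_minus_commute)

lemma transp_mmul: assumes "good r M1" "good r M2" "good r M1'" "good r M2'"
  "transp r M1' M1" "transp r M2' M2"
  shows "transp r (mmul r M2' M1') (mmul r M1 M2)"
  unfolding transp_def
proof (intro allI impI)
  fix s t :: "int list" assume ls: "length s = r" and lt: "length t = r"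
  have "mmul r M1 M2 t s = (\<Sum>u\<in>col r M2 s. M1 t u * M2 u s)" by (simp add: mmul_def)
  also have "\<dots> = (\<Sum>u\<in>col r M2 s. M2' s u * M1' u t)"
    using assms(5,6) ls lt by (intro sum.cong) (auto simp: transp_def col_def)
  also have "\<dots> = mmul r M2' M1' s t"
    by (rule mmul_eq_sum[symmetric]) (use finite_col[OF assms(2) ls] assms(5,6) ls lt assms(3) in \<open>auto simp: col_def transp_def\<close>)
  finally show "mmul r M2' M1' s t = mmul r M1 M2 t s" ..
qed

lemma transp_add: "transp r A' A \<Longrightarrow> transp r B' B \<Longrightarrow> transp r (\<lambda>s t. A' s t + B' s t) (\<lambda>s t. A s t + B s t)"
  unfolding transp_def by simp
lemma transp_smult: "transp r A' A \<Longrightarrow> transp r (\<lambda>s t. c * A' s t) (\<lambda>s t. c * A s t)"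
  unfolding transp_def by simp



lemma qq_nz: "qq \<noteq> 0"
  by (simp add: qq_def Zero_fract_def eq_fract)

lemma qq_powi1: "qq powi 1 = qq" by simp
lemma qq_powim1: "qq powi (-1) = inverse qq" by (simp add: power_int_minus)

lemma cng_step: assumes "n \<ge> 2" "cng n i b"
  shows "cng n (i+1) (b+1)" "\<not> cng n i (b+1)"
proof -
  show "cng n (i+1) (b+1)" using assms(2) unfolding cng_def by (metis mod_add_cong)
  show "\<not> cng n i (b+1)"
  proof
    assume "cng n i (b+1)"
    with assms(2) have "(b+1) mod int n = b mod int n" unfolding cng_def by simp
    hence "int n dvd ((b+1) - b)" by (simp add: mod_eq_dvd_iff)
    hence "int n dvd 1" by simp
    thus False using assms(1) by simp
  qed
qed

lemma sKt_inv: "sKt n i 1 a a * sKt n i (-1) a a = 1"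
  unfolding sKt_def sK_def using qq_nz by (auto simp: qq_powim1)

lemma sKt_diag: "a \<noteq> b \<Longrightarrow> sKt n i e a b = 0" unfolding sKt_def sK_def by simp

lemma facE: fixes k j :: nat assumes "n \<ge> 2"
  shows "(if k < j then sId else if k = j then sE n i else sKt n i 1) b a =
    (if k = j then qq else 1) * (sKt n i 1 a a * (if k < j then sKt n i (-1) else if k = j then sF n i else sId) a b)"
proof (cases "k < j")
  case True thus ?thesis
    using sKt_inv[of n i a] sKt_diag[of a b n i "-1"] by (auto simp: sId_def)
next
  case False
  show ?thesis
  proof (cases "k = j")
    case True
    show ?thesis
    proof (cases "a = b + 1 \<and> cng n i b")
      case c: True
      have "sKt n i 1 a a = inverse qq"
        using cng_step[OF assms, of i b] c unfolding sKt_def sK_def by (auto simp: qq_powim1)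
      thus ?thesis using True c qq_nz by (simp add: sE_def sF_def)
    next
      case False thus ?thesis using \<open>k = j\<close> by (auto simp: sE_def sF_def)
    qed
  next
    case False
    thus ?thesis using \<open>\<not> k < j\<close> sKt_diag[of b a n i 1] by (auto simp: sId_def)
  qed
qed

lemma facF: fixes k j :: nat assumes "n \<ge> 2"
  shows "(if k < j then sKt n i (-1) else if k = j then sF n i else sId) b a =
    (if k = j then qq else 1) * (sKt n i (-1) a a * (if k < j then sId else if k = j then sE n i else sKt n i 1) a b)"
proof (cases "k < j")
  case True thus ?thesis
    using sKt_diag[of b a n i "-1"] by (auto simp: sId_def)
next
  case False
  show ?thesis
  proof (cases "k = j")
    case True
    show ?thesis
    proof (cases "b = a + 1 \<and> cng n i a")
      case c: True
      have "sKt n i (-1) a a = inverse qq"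
        using c assms unfolding sKt_def sK_def cng_def by (auto simp: qq_powim1 dest: cng_step[unfolded cng_def])
      thus ?thesis using True c qq_nz by (simp add: sE_def sF_def)
    next
      case False thus ?thesis using \<open>k = j\<close> by (auto simp: sE_def sF_def)
    qed
  next
    case False
    thus ?thesis using \<open>\<not> k < j\<close> sKt_diag[of a b n i 1] sKt_inv[of n i a]
      by (auto simp: sId_def mult.commute)
  qed
qed

lemma prod_if_qq: "(j::nat) < r \<Longrightarrow> (\<Prod>k<r. (if k = j then qq else 1)) = qq"
  by (simp add: prod.delta)

lemma tprod_sKt: "MK n r i e s s * MK n r (i+1) (-e) s s = tprod r (\<lambda>k. sKt n i e) s s"
  unfolding MK_def tprod_def sKt_def by (simp add: prod.distrib)

lemma ME_T: assumes "n \<ge> 2"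
  shows "ME n r i t s = qq * (MK n r i 1 s s * (MK n r (i+1) (-1) s s * MF n r i s t))"
proof -
  have "qq * (MK n r i 1 s s * (MK n r (i+1) (-1) s s * MF n r i s t))
      = qq * (tprod r (\<lambda>k. sKt n i 1) s s * MF n r i s t)"
    using tprod_sKt[of n r i 1 s] by (simp add: mult.assoc)
  also have "\<dots> = (\<Sum>j<r. qq * (\<Prod>k<r. sKt n i 1 (s!k) (s!k) *
        (if k < j then sKt n i (-1) else if k = j then sF n i else sId) (s!k) (t!k)))"
    unfolding MF_def tprod_def by (simp add: sum_distrib_left prod.distrib)
  also have "\<dots> = ME n r i t s"
    unfolding ME_def tprod_def
  proof (rule sum.cong[OF refl])
    fix j assume "j \<in> {..<r}"
    hence j: "j < r" by simp
    have "(\<Prod>k<r. (if k < j then sId else if k = j then sE n i else sKt n i 1) (t!k) (s!k))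
       = (\<Prod>k<r. (if k = j then qq else 1) * (sKt n i 1 (s!k) (s!k) *
        (if k < j then sKt n i (-1) else if k = j then sF n i else sId) (s!k) (t!k)))"
      by (rule prod.cong[OF refl]) (rule facE[OF assms])
    also have "\<dots> = qq * (\<Prod>k<r. sKt n i 1 (s!k) (s!k) *
        (if k < j then sKt n i (-1) else if k = j then sF n i else sId) (s!k) (t!k))"
      by (simp add: prod.distrib prod_if_qq[OF j])
    finally show "qq * (\<Prod>k<r. sKt n i 1 (s!k) (s!k) *
        (if k < j then sKt n i (-1) else if k = j then sF n i else sId) (s!k) (t!k)) =
      (\<Prod>k<r. (if k < j then sId else if k = j then sE n i else sKt n i 1) (t!k) (s!k))" ..
  qed
  finally show ?thesis ..
qed

lemma MF_T: assumes "n \<ge> 2"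
  shows "MF n r i t s = qq * (MK n r i (-1) s s * (MK n r (i+1) 1 s s * ME n r i s t))"
proof -
  have "qq * (MK n r i (-1) s s * (MK n r (i+1) 1 s s * ME n r i s t))
      = qq * (tprod r (\<lambda>k. sKt n i (-1)) s s * ME n r i s t)"
    using tprod_sKt[of n r i "-1" s] by (simp add: mult.assoc)
  also have "\<dots> = (\<Sum>j<r. qq * (\<Prod>k<r. sKt n i (-1) (s!k) (s!k) *
        (if k < j then sId else if k = j then sE n i else sKt n i 1) (s!k) (t!k)))"
    unfolding ME_def tprod_def by (simp add: sum_distrib_left prod.distrib)
  also have "\<dots> = MF n r i t s"
    unfolding MF_def tprod_def
  proof (rule sum.cong[OF refl])
    fix j assume "j \<in> {..<r}"
    hence j: "j < r" by simp
    have "(\<Prod>k<r. (if k < j then sKt n i (-1) else if k = j then sF n i else sId) (t!k) (s!k))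
       = (\<Prod>k<r. (if k = j then qq else 1) * (sKt n i (-1) (s!k) (s!k) *
        (if k < j then sId else if k = j then sE n i else sKt n i 1) (s!k) (t!k)))"
      by (rule prod.cong[OF refl]) (rule facF[OF assms])
    also have "\<dots> = qq * (\<Prod>k<r. sKt n i (-1) (s!k) (s!k) *
        (if k < j then sId else if k = j then sE n i else sKt n i 1) (s!k) (t!k))"
      by (simp add: prod.distrib prod_if_qq[OF j])
    finally show "qq * (\<Prod>k<r. sKt n i (-1) (s!k) (s!k) *
        (if k < j then sId else if k = j then sE n i else sKt n i 1) (s!k) (t!k)) =
      (\<Prod>k<r. (if k < j then sKt n i (-1) else if k = j then sF n i else sId) (t!k) (s!k))" ..
  qed
  finally show ?thesis ..
qed



lemma idx: "n > 0 \<Longrightarrow> \<exists>i0\<in>{1..int n}. i0 mod int n = i mod int n"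
proof -
  assume n: "n > 0"
  show ?thesis
  proof (cases "i mod int n = 0")
    case True thus ?thesis using n by (intro bexI[of _ "int n"]) auto
  next
    case False
    have "0 \<le> i mod int n" "i mod int n < int n" using n by auto
    thus ?thesis using False by (intro bexI[of _ "i mod int n"]) auto
  qed
qed

lemma s_idx: assumes "i mod int n = i0 mod int n"
  shows "sE n i = sE n i0" "sF n i = sF n i0" "sK n i = sK n i0" "sKt n i = sKt n i0"
proof -
  have c: "cng n i = cng n i0" using assms by (auto simp: cng_def fun_eq_iff)
  have "(i+1) mod int n = (i0+1) mod int n" using assms by (metis mod_add_cong)
  hence c1: "cng n (i+1) = cng n (i0+1)" by (auto simp: cng_def fun_eq_iff)
  show "sE n i = sE n i0" unfolding sE_def c ..
  show "sF n i = sF n i0" unfolding sF_def c ..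
  show "sK n i = sK n i0" unfolding sK_def c ..
  show "sKt n i = sKt n i0" unfolding sKt_def sK_def c c1 ..
qed

lemma gen_E: "n > 0 \<Longrightarrow> psiE n r i \<in> affSchur n r"
proof -
  assume "n > 0"
  then obtain i0 where i0: "i0 \<in> {1..int n}" "i0 mod int n = i mod int n" using idx by blast
  have h: "i mod int n = i0 mod int n" using i0(2) by simp
  have "psiE n r i = psiE n r i0" unfolding psiE_def s_idx[OF h] ..
  thus ?thesis using i0 by (auto intro!: affSchur.gen simp: gens_def)
qed

lemma gen_F: "n > 0 \<Longrightarrow> psiF n r i \<in> affSchur n r"
proof -
  assume "n > 0"
  then obtain i0 where i0: "i0 \<in> {1..int n}" "i0 mod int n = i mod int n" using idx by blast
  have h: "i mod int n = i0 mod int n" using i0(2) by simp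
  have "psiF n r i = psiF n r i0" unfolding psiF_def s_idx[OF h] ..
  thus ?thesis using i0 by (auto intro!: affSchur.gen simp: gens_def)
qed

lemma gen_K: "n > 0 \<Longrightarrow> e \<in> {1,-1} \<Longrightarrow> psiK n r i e \<in> affSchur n r"
proof -
  assume "n > 0" "e \<in> {1,-1}"
  then obtain i0 where i0: "i0 \<in> {1..int n}" "i0 mod int n = i mod int n" using idx by blast
  have h: "i mod int n = i0 mod int n" using i0(2) by simp
  have "psiK n r i e = psiK n r i0 e" unfolding psiK_def s_idx[OF h] ..
  moreover have "psiK n r i0 e \<in> gens n r" unfolding gens_def using i0(1) \<open>e \<in> {1,-1}\<close> by blast
  ultimately show ?thesis by (simp add: affSchur.gen)
qed

lemma gen_R: "d \<in> {1,-1} \<Longrightarrow> psiR r d \<in> affSchur n r"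
  by (auto intro!: affSchur.gen simp: gens_def)

lemma comp_eq: "good r A \<Longrightarrow> good r B \<Longrightarrow> mat_op r (mmul r A B) = mat_op r A \<circ> mat_op r B"
  by (simp add: mat_op_comp)

lemma smult_eq: "mat_op r (\<lambda>s t. c * A s t) = (\<lambda>v s. c * mat_op r A v s)"
  by (simp add: mat_op_smult)

lemma transp_diag: "diagm r D \<Longrightarrow> (\<And>a. D a a = D a a) \<Longrightarrow> transp r D D"
  unfolding diagm_def transp_def by metis

definition SP :: "nat \<Rightarrow> nat \<Rightarrow> op \<Rightarrow> bool" where
  "SP n r X \<longleftrightarrow> (\<exists>M. good r M \<and> X = mat_op r M \<and>
      (\<exists>M'. good r M' \<and> transp r M' M \<and> mat_op r M' \<in> affSchur n r))"

lemma SP_E: assumes "n \<ge> 2" shows "SP n r (psiE n r i)"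
proof -
  define M' where "M' = (\<lambda>s t. qq * mmul r (MK n r i 1) (mmul r (MK n r (i+1) (-1)) (MF n r i)) s t)"
  have g: "good r M'" unfolding M'_def by (intro good_smult good_mmul good_MK good_MF)
  have "transp r M' (ME n r i)" unfolding transp_def M'_def
    by (simp add: mmul_diag_left diag_MK good_mmul good_MK good_MF ME_T[OF assms])
  moreover have "mat_op r M' \<in> affSchur n r"
    unfolding M'_def smult_eq comp_eq[OF good_MK good_mmul[OF good_MK good_MF]] comp_eq[OF good_MK good_MF]
    using assms by (intro affSchur.smult affSchur.mult gen_F gen_K[folded psiK_eq]) (auto simp: psiK_eq[symmetric] psiF_eq[symmetric] intro: gen_K gen_F)
  ultimately show ?thesis unfolding SP_def using g good_ME psiE_eq by blast
qed

lemma SP_F: assumes "n \<ge> 2" shows "SP n r (psiF n r i)"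
proof -
  define M' where "M' = (\<lambda>s t. qq * mmul r (MK n r i (-1)) (mmul r (MK n r (i+1) 1) (ME n r i)) s t)"
  have g: "good r M'" unfolding M'_def by (intro good_smult good_mmul good_MK good_ME)
  have "transp r M' (MF n r i)" unfolding transp_def M'_def
    by (simp add: mmul_diag_left diag_MK good_mmul good_MK good_ME MF_T[OF assms])
  moreover have "mat_op r M' \<in> affSchur n r"
    unfolding M'_def smult_eq comp_eq[OF good_MK good_mmul[OF good_MK good_ME]] comp_eq[OF good_MK good_ME]
    using assms by (intro affSchur.smult affSchur.mult) (auto simp: psiK_eq[symmetric] psiE_eq[symmetric] intro: gen_K gen_E)
  ultimately show ?thesis unfolding SP_def using g good_MF psiF_eq by blast
qed

lemma SP_K: assumes "n \<ge> 2" "e \<in> {1,-1}" shows "SP n r (psiK n r i e)"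
proof -
  have "transp r (MK n r i e) (MK n r i e)"
    using diag_MK[of r n i e] unfolding transp_def diagm_def by metis
  moreover have "mat_op r (MK n r i e) \<in> affSchur n r"
    using gen_K[of n e r i] assms by (simp add: psiK_eq)
  ultimately show ?thesis unfolding SP_def using good_MK psiK_eq by blast
qed

lemma SP_R: assumes "d \<in> {1,-1}" shows "SP n r (psiR r d)"
proof -
  have "transp r (MR r (-d)) (MR r d)"
    unfolding transp_def MR_def tprod_def sR_def by (auto intro!: prod.cong)
  moreover have "-d \<in> {1,-1}" using assms by auto
  moreover have "mat_op r (MR r (-d)) \<in> affSchur n r"
    using gen_R[of "-d" r n] \<open>-d \<in> {1,-1}\<close> by (simp add: psiR_eq)
  ultimately show ?thesis unfolding SP_def using good_MR[OF assms] good_MR psiR_eq by blast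
qed

lemma SP_I: "SP n r (psiId r)"
proof -
  have "transp r (MI r) (MI r)"
    using diag_MI[of r] unfolding transp_def diagm_def by metis
  moreover have "mat_op r (MI r) \<in> affSchur n r" using affSchur.one[of r n] by (simp add: psiId_eq)
  ultimately show ?thesis unfolding SP_def using good_MI psiId_eq by blast
qed

theorem S_struct: assumes "n \<ge> 2" "X \<in> affSchur n r" shows "SP n r X"
  using assms(2)
proof (induction rule: affSchur.induct)
  case (gen X)
  thus ?case using assms(1) SP_E SP_F SP_K SP_R unfolding gens_def by blast
next
  case one thus ?case by (rule SP_I)
next
  case (add X Y)
  then obtain A A' B B' where A: "good r A" "X = mat_op r A" "good r A'" "transp r A' A" "mat_op r A' \<in> affSchur n r"
    and B: "good r B" "Y = mat_op r B" "good r B'" "transp r B' B" "mat_op r B' \<in> affSchur n r"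
    unfolding SP_def by blast
  have "(\<lambda>v s. X v s + Y v s) = mat_op r (\<lambda>s t. A s t + B s t)" using A B by (simp add: mat_op_add)
  moreover have "mat_op r (\<lambda>s t. A' s t + B' s t) \<in> affSchur n r"
    using affSchur.add[OF A(5) B(5)] by (simp add: mat_op_add)
  ultimately show ?case unfolding SP_def using good_add[OF A(1) B(1)] good_add[OF A(3) B(3)] transp_add[OF A(4) B(4)] by blast
next
  case (smult X c)
  then obtain A A' where A: "good r A" "X = mat_op r A" "good r A'" "transp r A' A" "mat_op r A' \<in> affSchur n r"
    unfolding SP_def by blast
  have "(\<lambda>v s. c * X v s) = mat_op r (\<lambda>s t. c * A s t)" using A by (simp add: mat_op_smult)
  moreover have "mat_op r (\<lambda>s t. c * A' s t) \<in> affSchur n r"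
    using affSchur.smult[OF A(5)] by (simp add: mat_op_smult)
  ultimately show ?case unfolding SP_def using good_smult[OF A(1)] good_smult[OF A(3)] transp_smult[OF A(4)] by blast
next
  case (mult X Y)
  then obtain A A' B B' where A: "good r A" "X = mat_op r A" "good r A'" "transp r A' A" "mat_op r A' \<in> affSchur n r"
    and B: "good r B" "Y = mat_op r B" "good r B'" "transp r B' B" "mat_op r B' \<in> affSchur n r"
    unfolding SP_def by blast
  have "X \<circ> Y = mat_op r (mmul r A B)" using A B by (simp add: mat_op_comp)
  moreover have "mat_op r (mmul r B' A') \<in> affSchur n r"
    using affSchur.mult[OF B(5) A(5)] A B by (simp add: mat_op_comp)
  ultimately show ?case unfolding SP_def using good_mmul[OF A(1) B(1)] good_mmul[OF B(3) A(3)] transp_mmul[OF A(1) B(1) A(3) B(3) A(4) B(4)] by blast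
qed



lemma qq_pow: "qq ^ a = Fract ([:0,1:] ^ a) 1"
  by (induction a) (simp_all add: qq_def One_fract_def)

lemma qq_pow_inj: "qq ^ a = qq ^ b \<Longrightarrow> a = b"
proof -
  assume "qq ^ a = qq ^ b"
  hence "([:0,1:] ^ a :: rat poly) = [:0,1:] ^ b" by (simp add: qq_pow eq_fract)
  hence "degree ([:0,1:] ^ a :: rat poly) = degree ([:0,1::rat:] ^ b)" by simp
  thus "a = b" using degree_linear_power[of "0::rat"] by simp
qed

definition dg :: "(int list \<Rightarrow> K) \<Rightarrow> int list \<Rightarrow> int list \<Rightarrow> K" where
  "dg g = (\<lambda>s t. if s = t then g s else 0)"

definition DS :: "nat \<Rightarrow> nat \<Rightarrow> (int list \<Rightarrow> K) \<Rightarrow> bool" where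
  "DS n r g \<longleftrightarrow> mat_op r (dg g) \<in> affSchur n r"

lemma good_dg: "good r (dg g)" unfolding good_def dg_def by (intro exI[of _ 0]) auto
lemma diag_dg: "diagm r (dg g)" unfolding diagm_def dg_def by auto

lemma DS_mult: assumes "DS n r g" "DS n r h" shows "DS n r (\<lambda>s. g s * h s)"
proof -
  have e: "mmul r (dg g) (dg h) s t = dg (\<lambda>s. g s * h s) s t" if "length s = r" "length t = r" for s t
    using mmul_diag_left[OF diag_dg that good_dg, of g h] by (simp add: dg_def)
  have "mat_op r (dg g) \<circ> mat_op r (dg h) = mat_op r (mmul r (dg g) (dg h))"
    by (simp add: mat_op_comp good_dg)
  also have "\<dots> = mat_op r (dg (\<lambda>s. g s * h s))"
    unfolding mat_op_eq_iff using e by blast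
  finally have "mat_op r (dg (\<lambda>s. g s * h s)) = mat_op r (dg g) \<circ> mat_op r (dg h)" ..
  thus ?thesis using affSchur.mult[of "mat_op r (dg g)" n r "mat_op r (dg h)"] assms unfolding DS_def by simp
qed

lemma DS_add: assumes "DS n r g" "DS n r h" shows "DS n r (\<lambda>s. g s + h s)"
proof -
  have "mat_op r (dg (\<lambda>s. g s + h s)) = mat_op r (\<lambda>s t. dg g s t + dg h s t)"
    unfolding mat_op_eq_iff by (auto simp: dg_def)
  also have "\<dots> = (\<lambda>v s. mat_op r (dg g) v s + mat_op r (dg h) v s)" by (rule mat_op_add[symmetric])
  finally show ?thesis using affSchur.add[of "mat_op r (dg g)" n r "mat_op r (dg h)"] assms unfolding DS_def by simp
qed

lemma DS_smult: assumes "DS n r g" shows "DS n r (\<lambda>s. c * g s)"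
proof -
  have "mat_op r (dg (\<lambda>s. c * g s)) = mat_op r (\<lambda>s t. c * dg g s t)"
    unfolding mat_op_eq_iff by (auto simp: dg_def)
  also have "\<dots> = (\<lambda>v s. c * mat_op r (dg g) v s)" by (rule mat_op_smult[symmetric])
  finally show ?thesis using affSchur.smult[of "mat_op r (dg g)" n r c] assms unfolding DS_def by simp
qed

lemma MI_dg: "mat_op r (MI r) = mat_op r (dg (\<lambda>_. 1))"
  unfolding mat_op_eq_iff
proof (intro allI impI)
  fix s t :: "int list" assume "length s = r" "length t = r"
  thus "MI r s t = dg (\<lambda>_. 1) s t"
    using diag_MI[of r] unfolding diagm_def dg_def by (auto simp: MI_def tprod_def sId_def)
qed

lemma DS_one: "DS n r (\<lambda>_. 1)"
  unfolding DS_def using affSchur.one[of r n] by (simp add: psiId_eq MI_dg)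

definition cnt :: "nat \<Rightarrow> nat \<Rightarrow> int \<Rightarrow> int list \<Rightarrow> nat" where
  "cnt n r i s = card {j. j < r \<and> cng n (s ! j) i}"

lemma cng_sym: "cng n a b = cng n b a" unfolding cng_def by auto

lemma DS_K: assumes "n > 0" shows "DS n r (\<lambda>s. qq ^ cnt n r i s)"
proof -
  have "mat_op r (MK n r i 1) = mat_op r (dg (\<lambda>s. qq ^ cnt n r i s))"
    unfolding mat_op_eq_iff
  proof (intro allI impI)
    fix s t :: "int list" assume l: "length s = r" "length t = r"
    show "MK n r i 1 s t = dg (\<lambda>s. qq ^ cnt n r i s) s t"
    proof (cases "s = t")
      case True
      have "MK n r i 1 s s = (\<Prod>k<r. if cng n i (s!k) then qq else 1)"
        by (simp add: MK_def tprod_def sK_def qq_powi1 cong: if_cong)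
      also have "\<dots> = (\<Prod>k\<in>{k\<in>{..<r}. cng n i (s!k)}. qq)"
        by (rule prod.inter_filter[symmetric]) simp
      also have "\<dots> = qq ^ card {k\<in>{..<r}. cng n i (s!k)}" by simp
      also have "{k\<in>{..<r}. cng n i (s!k)} = {j. j < r \<and> cng n (s ! j) i}"
        by (auto simp: cng_sym)
      also have "qq ^ card {j. j < r \<and> cng n (s ! j) i} = qq ^ cnt n r i s"
        unfolding cnt_def ..
      finally show ?thesis using True by (simp add: dg_def)
    next
      case False thus ?thesis using diag_MK[of r n i 1] l unfolding diagm_def dg_def by auto
    qed
  qed
  thus ?thesis unfolding DS_def using gen_K[OF assms, of 1 r i] by (simp add: psiK_eq)
qed

lemma DS_prod: "finite A \<Longrightarrow> (\<And>a. a \<in> A \<Longrightarrow> DS n r (f a)) \<Longrightarrow> DS n r (\<lambda>s. \<Prod>a\<in>A. f a s)"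
proof (induction A rule: finite_induct)
  case empty thus ?case by (simp add: DS_one)
next
  case (insert x F)
  have "DS n r (\<lambda>s. f x s * (\<Prod>a\<in>F. f a s))" by (rule DS_mult) (use insert in auto)
  thus ?case using insert by simp
qed

definition interp :: "nat \<Rightarrow> nat \<Rightarrow> int \<Rightarrow> nat \<Rightarrow> int list \<Rightarrow> K" where
  "interp n r i l s = (\<Prod>m\<in>{0..r} - {l}. inverse (qq ^ l - qq ^ m) * (qq ^ cnt n r i s + (- (qq ^ m)) * 1))"

lemma DS_interp: "n > 0 \<Longrightarrow> DS n r (interp n r i l)"
  unfolding interp_def
  by (intro DS_prod DS_smult DS_add DS_K DS_one) auto

lemma cnt_le: "cnt n r i s \<le> r"
proof -
  have "{j. j < r \<and> cng n (s ! j) i} \<subseteq> {..<r}" by auto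
  thus ?thesis unfolding cnt_def using card_mono[of "{..<r}"] by fastforce
qed

lemma interp_val: assumes "l \<le> r"
  shows "interp n r i l s = (if cnt n r i s = l then 1 else 0)"
proof (cases "cnt n r i s = l")
  case True
  have "\<forall>m\<in>{0..r} - {l}. inverse (qq ^ l - qq ^ m) * (qq ^ cnt n r i s + (- (qq ^ m)) * 1) = 1"
  proof
    fix m assume "m \<in> {0..r} - {l}"
    hence "qq ^ l \<noteq> qq ^ m" using qq_pow_inj by auto
    thus "inverse (qq ^ l - qq ^ m) * (qq ^ cnt n r i s + (- (qq ^ m)) * 1) = 1"
      using True by (simp add: field_simps)
  qed
  thus ?thesis using True unfolding interp_def by simp
next
  case False
  have "cnt n r i s \<in> {0..r} - {l}" using False cnt_le by auto
  moreover have "inverse (qq ^ l - qq ^ cnt n r i s) * (qq ^ cnt n r i s + (- (qq ^ cnt n r i s)) * 1) = 0"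
    by simp
  ultimately have "interp n r i l s = 0" unfolding interp_def
    by (meson finite_Diff finite_atLeastAtMost prod_zero_iff)
  thus ?thesis using False by simp
qed

definition lamr :: "nat \<Rightarrow> int \<Rightarrow> nat" where "lamr r i = (if i \<le> int r then 1 else 0)"

lemma one_r_eq: "one_r n r = wtproj n r (lamr r)"
  unfolding one_r_def lamr_def ..

lemma one_r_in: assumes "n > 0" "r \<ge> 1" shows "one_r n r \<in> affSchur n r"
proof -
  define G where "G = (\<lambda>s. \<Prod>i\<in>{1..int n}. interp n r i (lamr r i) s)"
  have DG: "DS n r G" unfolding G_def by (intro DS_prod DS_interp assms) auto
  have G: "G s = (if \<forall>i\<in>{1..int n}. cnt n r i s = lamr r i then 1 else 0)" for s
  proof -
    have lr: "lamr r i \<le> r" for i using assms(2) by (simp add: lamr_def)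
    have "G s = (\<Prod>i\<in>{1..int n}. if cnt n r i s = lamr r i then 1 else 0)"
      unfolding G_def by (intro prod.cong) (auto simp: interp_val[OF lr])
    thus ?thesis by (auto simp: prod_zero_iff)
  qed
  have "one_r n r = mat_op r (dg G)"
    unfolding one_r_eq wtproj_def mat_op_eq_iff dg_def G cnt_def by auto
  thus ?thesis using DG unfolding DS_def by simp
qed



lemma prod_if_filter: "(\<Prod>k<(r::nat). if P k then f k else (1::'a::comm_monoid_mult)) = (\<Prod>k\<in>{k. k < r \<and> P k}. f k)"
  by (rule prod.mono_neutral_cong_right) auto

definition Wr :: "nat \<Rightarrow> nat \<Rightarrow> int list \<Rightarrow> bool" where
  "Wr n r u \<longleftrightarrow> length u = r \<and> (\<forall>i\<in>{1..int n}. card {j. j < r \<and> cng n (u!j) i} = lamr r i)"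

definition Reach :: "nat \<Rightarrow> nat \<Rightarrow> int list \<Rightarrow> bool" where
  "Reach n r t \<longleftrightarrow> (\<exists>M u \<alpha>. good r M \<and> mat_op r M \<in> affSchur n r \<and> Wr n r u \<and> \<alpha> \<noteq> 0 \<and>
      (\<forall>s. length s = r \<longrightarrow> M s u = (if s = t then \<alpha> else 0)))"

lemma MI_val: "length s = r \<Longrightarrow> length t = r \<Longrightarrow> MI r s t = (if s = t then 1 else 0)"
  using diag_MI[of r] unfolding diagm_def by (auto simp: MI_def tprod_def sId_def)

lemma Reach_base: "Wr n r u \<Longrightarrow> Reach n r u"
  unfolding Reach_def
  apply (rule exI[of _ "MI r"], rule exI[of _ u], rule exI[of _ 1])
  using good_MI affSchur.one[of r n] by (auto simp: psiId_eq MI_val Wr_def)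

lemma Reach_step:
  assumes "good r A" "mat_op r A \<in> affSchur n r" "Reach n r t'" "length t' = r" "\<beta> \<noteq> 0"
    "\<And>s. length s = r \<Longrightarrow> A s t' = (if s = t then \<beta> else 0)"
  shows "Reach n r t"
proof -
  obtain M u \<alpha> where M: "good r M" "mat_op r M \<in> affSchur n r" "Wr n r u" "\<alpha> \<noteq> 0"
    "\<forall>s. length s = r \<longrightarrow> M s u = (if s = t' then \<alpha> else 0)"
    using assms(3) unfolding Reach_def by blast
  have lu: "length u = r" using M(3) by (simp add: Wr_def)
  have c: "col r M u = {t'}" using M(4,5) assms(4) by (auto simp: col_def split: if_splits)
  have "\<forall>s. length s = r \<longrightarrow> mmul r A M s u = (if s = t then \<beta> * \<alpha> else 0)"
    using assms(6) by (simp add: mmul_def c M(5) assms(4))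
  moreover have "mat_op r (mmul r A M) \<in> affSchur n r"
    using affSchur.mult[OF assms(2) M(2)] by (simp add: mat_op_comp assms(1) M(1))
  ultimately show ?thesis unfolding Reach_def using good_mmul[OF assms(1) M(1)] M(3) M(4) assms(5)
    by (intro exI[of _ "mmul r A M"] exI[of _ u] exI[of _ "\<beta> * \<alpha>"]) auto
qed

lemma tprod_zero: "k < r \<Longrightarrow> F k (s!k) (t!k) = 0 \<Longrightarrow> tprod r F s t = 0"
  using tprod_nz by blast

lemma sKt_nz: "sKt n i e a a \<noteq> 0"
  unfolding sKt_def sK_def using qq_nz by auto

lemma list_neq: "length s = length t \<Longrightarrow> s \<noteq> t \<Longrightarrow> \<exists>k<length t. s!k \<noteq> t!k"
  using nth_equalityI by metis

lemma MF_col: assumes "n \<ge> 2" "length t' = r" "j < r" "\<forall>k<r. k \<noteq> j \<longrightarrow> \<not> cng n (t'!k) (t'!j)"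
  and "length s = r"
  shows "MF n r (t'!j) s t' = (if s = t'[j := t'!j + 1] then (\<Prod>k<j. sKt n (t'!j) (-1) (t'!k) (t'!k)) else 0)"
proof -
  define i where "i = t'!j"
  define G where "G = (\<lambda>j'. tprod r (\<lambda>k. if k < j' then sKt n i (-1) else if k = j' then sF n i else sId) s t')"
  have z: "G j' = 0" if "j' < r" "j' \<noteq> j" for j'
    unfolding G_def
    by (rule tprod_zero[OF that(1)]) (use assms(4) that in \<open>auto simp: sF_def i_def cng_sym\<close>)
  have "MF n r i s t' = (\<Sum>j'<r. G j')" by (simp add: MF_def G_def)
  also have "\<dots> = G j"
  proof -
    have "(\<Sum>j'\<in>{..<r}-{j}. G j') = 0" using z by (intro sum.neutral) auto
    thus ?thesis using assms(3) by (simp add: sum.remove)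
  qed
  also have "G j = (if s = t'[j := t'!j + 1] then (\<Prod>k<j. sKt n i (-1) (t'!k) (t'!k)) else 0)"
  proof (cases "s = t'[j := t'!j + 1]")
    case True
    have "G j = (\<Prod>k<r. if k < j then sKt n i (-1) (t'!k) (t'!k) else 1)"
      unfolding G_def tprod_def using True assms(2,3) by (intro prod.cong) (auto simp: sF_def sId_def i_def cng_def)
    also have "\<dots> = (\<Prod>k\<in>{k. k < r \<and> k < j}. sKt n i (-1) (t'!k) (t'!k))"
      by (rule prod_if_filter)
    also have "{k. k < r \<and> k < j} = {..<j}" using assms(3) by auto
    finally show ?thesis using True by simp
  next
    case False
    have "\<exists>k<length (t'[j := t'!j + 1]). s!k \<noteq> t'[j := t'!j + 1] ! k"
      by (rule list_neq) (use False assms(2,5) in simp_all)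
    then obtain k where k: "k < r" "s!k \<noteq> t'[j := t'!j + 1] ! k" using assms(2) by auto
    have sk: "s!k \<noteq> (if k = j then t'!j + 1 else t'!k)" using k(2) assms(2,3) by (cases "k = j") auto
    have "(if k < j then sKt n i (-1) else if k = j then sF n i else sId) (s!k) (t'!k) = 0"
    proof (cases "k < j")
      case True thus ?thesis using sk sKt_diag by auto
    next
      case False thus ?thesis using sk by (cases "k = j") (auto simp: sF_def sId_def)
    qed
    hence "G j = 0" unfolding G_def by (rule tprod_zero[OF k(1)])
    thus ?thesis using False by simp
  qed
  finally show ?thesis by (simp add: i_def)
qed

lemma ME_col: assumes "n \<ge> 2" "length t' = r" "j < r" "\<forall>k<r. k \<noteq> j \<longrightarrow> \<not> cng n (t'!k) (t'!j)"
  and "length s = r"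
  shows "ME n r (t'!j - 1) s t' = (if s = t'[j := t'!j - 1] then (\<Prod>k\<in>{j<..<r}. sKt n (t'!j - 1) 1 (t'!k) (t'!k)) else 0)"
proof -
  define i where "i = t'!j - 1"
  define G where "G = (\<lambda>j'. tprod r (\<lambda>k. if k < j' then sId else if k = j' then sE n i else sKt n i 1) s t')"
  have z: "G j' = 0" if "j' < r" "j' \<noteq> j" for j'
  proof -
    have "sE n i (s!j') (t'!j') = 0"
    proof (rule ccontr)
      assume "sE n i (s!j') (t'!j') \<noteq> 0"
      hence "t'!j' = s!j' + 1" "cng n i (s!j')" by (auto simp: sE_def split: if_splits)
      hence "cng n (i+1) (t'!j')" using cng_step(1)[OF assms(1)] by simp
      hence "cng n (t'!j') (t'!j)" by (simp add: i_def cng_def)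
      thus False using assms(4) that by auto
    qed
    thus ?thesis unfolding G_def by (intro tprod_zero[OF that(1)]) simp
  qed
  have "ME n r i s t' = (\<Sum>j'<r. G j')" by (simp add: ME_def G_def)
  also have "\<dots> = G j"
  proof -
    have "(\<Sum>j'\<in>{..<r}-{j}. G j') = 0" using z by (intro sum.neutral) auto
    thus ?thesis using assms(3) by (simp add: sum.remove)
  qed
  also have "G j = (if s = t'[j := t'!j - 1] then (\<Prod>k\<in>{j<..<r}. sKt n i 1 (t'!k) (t'!k)) else 0)"
  proof (cases "s = t'[j := t'!j - 1]")
    case True
    have "G j = (\<Prod>k<r. if j < k then sKt n i 1 (t'!k) (t'!k) else 1)"
      unfolding G_def tprod_def using True assms(2,3) by (intro prod.cong) (auto simp: sE_def sId_def i_def cng_def)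
    also have "\<dots> = (\<Prod>k\<in>{k. k < r \<and> j < k}. sKt n i 1 (t'!k) (t'!k))"
      by (rule prod_if_filter)
    also have "{k. k < r \<and> j < k} = {j<..<r}" by auto
    finally show ?thesis using True by simp
  next
    case False
    have "\<exists>k<length (t'[j := t'!j - 1]). s!k \<noteq> t'[j := t'!j - 1] ! k"
      by (rule list_neq) (use False assms(2,5) in simp_all)
    then obtain k where k: "k < r" "s!k \<noteq> t'[j := t'!j - 1] ! k" using assms(2) by auto
    have sk: "s!k \<noteq> (if k = j then t'!j - 1 else t'!k)" using k(2) assms(2,3) by (cases "k = j") auto
    have "(if k < j then sId else if k = j then sE n i else sKt n i 1) (s!k) (t'!k) = 0"
    proof (cases "k < j")
      case True thus ?thesis using sk by (auto simp: sId_def)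
    next
      case False thus ?thesis using sk sKt_diag by (cases "k = j") (auto simp: sE_def)
    qed
    hence "G j = 0" unfolding G_def by (rule tprod_zero[OF k(1)])
    thus ?thesis using False by simp
  qed
  finally show ?thesis by (simp add: i_def)
qed

definition free :: "nat \<Rightarrow> int list \<Rightarrow> int \<Rightarrow> bool" where
  "free n t c \<longleftrightarrow> (\<forall>k<length t. \<not> cng n (t!k) c)"

lemma move_down: assumes "n \<ge> 2" "Reach n r (t[j := t!j - 1])" "length t = r" "j < r" "free n t (t!j - 1)"
  shows "Reach n r t"
proof -
  define t' where "t' = t[j := t!j - 1]"
  have l: "length t' = r" using assms(3) by (simp add: t'_def)
  have tj: "t'!j = t!j - 1" using assms(3,4) by (simp add: t'_def)
  have u: "\<forall>k<r. k \<noteq> j \<longrightarrow> \<not> cng n (t'!k) (t'!j)"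
    using assms(3,4,5) by (auto simp: t'_def free_def)
  have b: "t'[j := t'!j + 1] = t" using tj by (simp add: t'_def)
  show ?thesis
  proof (rule Reach_step[where A="MF n r (t'!j)" and \<beta>="\<Prod>k<j. sKt n (t'!j) (-1) (t'!k) (t'!k)" and t'=t'])
    show "good r (MF n r (t'!j))" by (rule good_MF)
    show "mat_op r (MF n r (t'!j)) \<in> affSchur n r" using gen_F[of n r "t'!j"] assms(1) by (simp add: psiF_eq)
    show "Reach n r t'" using assms(2) by (simp add: t'_def)
    show "length t' = r" by (rule l)
    show "(\<Prod>k<j. sKt n (t'!j) (-1) (t'!k) (t'!k)) \<noteq> 0" using sKt_nz by (simp add: prod_zero_iff)
    show "MF n r (t'!j) s t' = (if s = t then \<Prod>k<j. sKt n (t'!j) (-1) (t'!k) (t'!k) else 0)" if "length s = r" for s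
      using MF_col[OF assms(1) l assms(4) u that] b by simp
  qed
qed

lemma move_up: assumes "n \<ge> 2" "Reach n r (t[j := t!j + 1])" "length t = r" "j < r" "free n t (t!j + 1)"
  shows "Reach n r t"
proof -
  define t' where "t' = t[j := t!j + 1]"
  have l: "length t' = r" using assms(3) by (simp add: t'_def)
  have tj: "t'!j = t!j + 1" using assms(3,4) by (simp add: t'_def)
  have u: "\<forall>k<r. k \<noteq> j \<longrightarrow> \<not> cng n (t'!k) (t'!j)"
    using assms(3,4,5) by (auto simp: t'_def free_def)
  have b: "t'[j := t'!j - 1] = t" using tj by (simp add: t'_def)
  show ?thesis
  proof (rule Reach_step[where A="ME n r (t'!j - 1)" and \<beta>="\<Prod>k\<in>{j<..<r}. sKt n (t'!j - 1) 1 (t'!k) (t'!k)" and t'=t'])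
    show "good r (ME n r (t'!j - 1))" by (rule good_ME)
    show "mat_op r (ME n r (t'!j - 1)) \<in> affSchur n r" using gen_E[of n r "t'!j - 1"] assms(1) by (simp add: psiE_eq)
    show "Reach n r t'" using assms(2) by (simp add: t'_def)
    show "length t' = r" by (rule l)
    show "(\<Prod>k\<in>{j<..<r}. sKt n (t'!j - 1) 1 (t'!k) (t'!k)) \<noteq> 0" using sKt_nz by (simp add: prod_zero_iff)
    show "ME n r (t'!j - 1) s t' = (if s = t then \<Prod>k\<in>{j<..<r}. sKt n (t'!j - 1) 1 (t'!k) (t'!k) else 0)" if "length s = r" for s
      using ME_col[OF assms(1) l assms(4) u that] b by simp
  qed
qed



definition phi :: "nat \<Rightarrow> int \<Rightarrow> nat" where
  "phi n x = (if x mod int n = 0 then n else nat (x mod int n))"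

lemma phi_range: "n > 0 \<Longrightarrow> 1 \<le> phi n x \<and> phi n x \<le> n"
proof -
  assume n: "n > 0"
  have a: "0 \<le> x mod int n" "x mod int n < int n" using n by auto
  show ?thesis
  proof (cases "x mod int n = 0")
    case True thus ?thesis using n by (simp add: phi_def)
  next
    case False
    hence "1 \<le> x mod int n" using a by linarith
    hence "1 \<le> nat (x mod int n)" "nat (x mod int n) \<le> n" using a by linarith+
    thus ?thesis using False by (simp add: phi_def)
  qed
qed

lemma phi_cng: "n > 0 \<Longrightarrow> cng n (int (phi n x)) x"
  unfolding phi_def cng_def by auto

lemma phi_eq_iff: "n > 0 \<Longrightarrow> phi n x = phi n y \<longleftrightarrow> cng n x y"
proof
  assume n: "n > 0" and "phi n x = phi n y"
  thus "cng n x y" using phi_cng[OF n, of x] phi_cng[OF n, of y] by (simp add: cng_def)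
next
  assume "cng n x y" thus "phi n x = phi n y" by (simp add: phi_def cng_def)
qed

lemma phi_of: "i \<in> {1..int n} \<Longrightarrow> phi n i = nat i"
proof -
  assume i: "i \<in> {1..int n}"
  show ?thesis
  proof (cases "i = int n")
    case True thus ?thesis by (simp add: phi_def)
  next
    case False
    hence "i mod int n = i" using i by (intro mod_pos_pos_trivial) auto
    thus ?thesis using i by (simp add: phi_def)
  qed
qed

lemma phi_pred: assumes "n \<ge> 2" "phi n x \<ge> 2" shows "phi n (x - 1) = phi n x - 1"
proof (cases "x mod int n = 0")
  case True
  have "(x - 1) mod int n = (x mod int n - 1) mod int n" by (simp add: mod_diff_left_eq)
  also have "\<dots> = int n - 1" using True assms(1) by (simp add: zmod_minus1)
  finally show ?thesis using True assms(1) by (simp add: phi_def)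
next
  case False
  define m where "m = x mod int n"
  have m: "0 \<le> m" "m < int n" using assms(1) by (auto simp: m_def)
  have m2: "m \<ge> 2" using assms(2) False by (simp add: phi_def m_def)
  have "(x - 1) mod int n = (m - 1) mod int n" by (simp add: mod_diff_left_eq m_def)
  also have "\<dots> = m - 1" using m m2 by (intro mod_pos_pos_trivial) auto
  finally show ?thesis using False m2 by (simp add: phi_def m_def[symmetric] nat_diff_distrib)
qed

lemma cng_trans: "cng n a b \<Longrightarrow> cng n b c \<Longrightarrow> cng n a c" unfolding cng_def by simp
lemma cng_refl: "cng n a a" unfolding cng_def by simp
lemma cng_add1: "cng n a b \<Longrightarrow> cng n (a + c) (b + c)" unfolding cng_def by (metis mod_add_cong)

definition dist :: "nat \<Rightarrow> nat \<Rightarrow> int list \<Rightarrow> bool" where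
  "dist n r t \<longleftrightarrow> (\<forall>k<r. \<forall>k'<r. k \<noteq> k' \<longrightarrow> \<not> cng n (t!k) (t!k'))"

lemma A_key: assumes "n \<ge> 2" "n > r" "length t = r" "dist n r t"
  "\<forall>j<r. 2 \<le> phi n (t!j) \<longrightarrow> \<not> free n t (t!j - 1)"
  shows "Wr n r t"
proof -
  have n0: "n > 0" using assms(1) by simp
  define Oc where "Oc = (\<lambda>k. phi n (t!k)) ` {..<r}"
  have inj: "inj_on (\<lambda>k. phi n (t!k)) {..<r}"
    using assms(4) phi_eq_iff[OF n0] unfolding inj_on_def dist_def by blast
  have cOc: "card Oc = r" unfolding Oc_def using card_image[OF inj] by simp
  have fOc: "finite Oc" unfolding Oc_def by simp
  have down: "x - 1 \<in> Oc" if "x \<in> Oc" "2 \<le> x" for x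
  proof -
    have "x \<in> (\<lambda>k. phi n (t!k)) ` {..<r}" using that(1) by (simp add: Oc_def)
    then obtain j where j: "j < r" "x = phi n (t!j)" by auto
    hence "\<not> free n t (t!j - 1)" using assms(5) that(2) by auto
    then obtain k where k: "k < r" "cng n (t!k) (t!j - 1)" using assms(3) unfolding free_def by auto
    have "phi n (t!k) = phi n (t!j - 1)" using k(2) phi_eq_iff[OF n0] by blast
    also have "\<dots> = x - 1" using phi_pred[OF assms(1)] j that(2) by simp
    finally show ?thesis using k(1) unfolding Oc_def by force
  qed
  have clos: "\<forall>x\<in>Oc. d < x \<longrightarrow> x - d \<in> Oc" for d
  proof (induction d)
    case 0 thus ?case by simp
  next
    case (Suc d)
    show ?case
    proof (intro ballI impI)
      fix x assume x: "x \<in> Oc" "Suc d < x"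
      hence "x - d \<in> Oc" using Suc by auto
      moreover have "2 \<le> x - d" using x by simp
      ultimately have "x - d - 1 \<in> Oc" using down by blast
      thus "x - Suc d \<in> Oc" by simp
    qed
  qed
  have O1: "1 \<le> x" if "x \<in> Oc" for x using that phi_range[OF n0] unfolding Oc_def by auto
  have sub: "{1..x} \<subseteq> Oc" if "x \<in> Oc" for x
  proof
    fix y assume y: "y \<in> {1..x}"
    hence "x - (x - y) \<in> Oc" using clos[of "x - y"] that by auto
    thus "y \<in> Oc" using y by simp
  qed
  have le: "x \<le> r" if "x \<in> Oc" for x
    using card_mono[OF fOc sub[OF that]] cOc by simp
  have Oc_eq: "Oc = {1..r}"
    by (rule card_subset_eq) (use O1 le cOc in auto)
  show ?thesis unfolding Wr_def
  proof (intro conjI ballI)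
    show "length t = r" by fact
  next
    fix i assume i: "i \<in> {1..int n}"
    show "card {j. j < r \<and> cng n (t!j) i} = lamr r i"
    proof (cases "i \<le> int r")
      case True
      hence "nat i \<in> Oc" using Oc_eq i by auto
      then obtain k where k: "k < r" "phi n (t!k) = nat i" unfolding Oc_def by auto
      hence ck: "cng n (t!k) i" using phi_eq_iff[OF n0] phi_of[OF i] by metis
      have "{j. j < r \<and> cng n (t!j) i} = {k}"
      proof
        show "{k} \<subseteq> {j. j < r \<and> cng n (t!j) i}" using k ck by auto
        show "{j. j < r \<and> cng n (t!j) i} \<subseteq> {k}"
        proof
          fix j assume "j \<in> {j. j < r \<and> cng n (t!j) i}"
          hence "j < r" "cng n (t!j) (t!k)" using ck cng_trans cng_sym by blast+
          thus "j \<in> {k}" using assms(4) k(1) unfolding dist_def by auto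
        qed
      qed
      thus ?thesis using True by (simp add: lamr_def)
    next
      case False
      have "{j. j < r \<and> cng n (t!j) i} = {}"
      proof (rule ccontr)
        assume "{j. j < r \<and> cng n (t!j) i} \<noteq> {}"
        then obtain j where j: "j < r" "cng n (t!j) i" by auto
        hence "phi n (t!j) = nat i" using phi_eq_iff[OF n0] phi_of[OF i] by metis
        moreover have "phi n (t!j) \<in> Oc" using j unfolding Oc_def by auto
        ultimately show False using Oc_eq False by auto
      qed
      thus ?thesis using False by (simp add: lamr_def)
    qed
  qed
qed

definition Phi :: "nat \<Rightarrow> nat \<Rightarrow> int list \<Rightarrow> nat" where
  "Phi n r t = (\<Sum>k<r. phi n (t!k))"

lemma lemA: assumes "n \<ge> 2" "n > r"
  shows "length t = r \<Longrightarrow> dist n r t \<Longrightarrow> Reach n r t"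
proof (induction "Phi n r t" arbitrary: t rule: less_induct)
  case less
  show ?case
  proof (cases "Wr n r t")
    case True thus ?thesis by (rule Reach_base)
  next
    case False
    then obtain j where j: "j < r" "2 \<le> phi n (t!j)" "free n t (t!j - 1)"
      using A_key[OF assms less.prems] by blast
    define t' where "t' = t[j := t!j - 1]"
    have l: "length t' = r" using less.prems by (simp add: t'_def)
    have d: "dist n r t'"
      unfolding dist_def
    proof (intro allI impI)
      fix k k' assume kk: "k < r" "k' < r" "k \<noteq> k'"
      show "\<not> cng n (t'!k) (t'!k')"
      proof (cases "k = j \<or> k' = j")
        case True
        thus ?thesis using kk j(3) less.prems(1) cng_sym unfolding free_def t'_def by (auto simp: nth_list_update)
      next
        case False thus ?thesis using kk less.prems(2) unfolding dist_def t'_def by auto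
      qed
    qed
    have fin: "finite {..<r}" by simp
    have "Phi n r t = phi n (t!j) + (\<Sum>k\<in>{..<r}-{j}. phi n (t!k))"
      unfolding Phi_def using j(1) by (simp add: sum.remove)
    moreover have "Phi n r t' = phi n (t!j - 1) + (\<Sum>k\<in>{..<r}-{j}. phi n (t!k))"
      unfolding Phi_def using j(1) less.prems(1) by (simp add: sum.remove t'_def)
    moreover have "phi n (t!j - 1) = phi n (t!j) - 1" using phi_pred[OF assms(1) j(2)] .
    ultimately have "Phi n r t' < Phi n r t" using j(2) by simp
    hence "Reach n r t'" using less.hyps l d by blast
    thus ?thesis using move_down[OF assms(1) _ less.prems(1) j(1) j(3)] by (simp add: t'_def)
  qed
qed

definition res :: "nat \<Rightarrow> nat \<Rightarrow> int list \<Rightarrow> int set" where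
  "res n r t = (\<lambda>k. t!k mod int n) ` {..<r}"

definition occ :: "nat \<Rightarrow> nat \<Rightarrow> int list \<Rightarrow> nat" where
  "occ n r t = card (res n r t)"

lemma occ_le: "occ n r t \<le> r"
  unfolding occ_def res_def using card_image_le[of "{..<r}"] by simp

lemma occ_dist: assumes "occ n r t = r" shows "dist n r t"
proof -
  have "inj_on (\<lambda>k. t!k mod int n) {..<r}"
    by (rule eq_card_imp_inj_on) (use assms in \<open>auto simp: occ_def res_def\<close>)
  thus ?thesis unfolding dist_def inj_on_def cng_def by auto
qed

lemma free_res: "length t = r \<Longrightarrow> free n t c \<longleftrightarrow> c mod int n \<notin> res n r t"
  unfolding free_def res_def cng_def by (auto simp: image_iff) (metis lessThan_iff)

lemma free_cong: "cng n a b \<Longrightarrow> free n t a = free n t b"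
  unfolding free_def cng_def by auto

lemma occ_up: assumes "length t = r" "p < r" "q < r" "q \<noteq> p" "cng n (t!q) (t!p)" "free n t (t!p + 1)"
  shows "occ n r t < occ n r (t[p := t!p + 1])"
proof -
  define t' where "t' = t[p := t!p + 1]"
  have "res n r t \<subseteq> res n r t'"
  proof
    fix c assume "c \<in> res n r t"
    then obtain k where k: "k < r" "c = t!k mod int n" unfolding res_def by auto
    show "c \<in> res n r t'"
    proof (cases "k = p")
      case True
      have "c = t'!q mod int n" using k True assms(1,4,5) by (simp add: t'_def cng_def)
      thus ?thesis using assms(3) unfolding res_def by auto
    next
      case False thus ?thesis using k assms(1) unfolding res_def t'_def by force
    qed
  qed
  moreover have "(t!p + 1) mod int n \<in> res n r t'"
    using assms(1,2) unfolding res_def t'_def by force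
  moreover have "(t!p + 1) mod int n \<notin> res n r t" using free_res[OF assms(1)] assms(6) by simp
  ultimately have "res n r t \<subset> res n r t'" by blast
  thus ?thesis unfolding occ_def t'_def[symmetric] by (intro psubset_card_mono) (auto simp: res_def)
qed

lemma occ_same: assumes "length t = r" "p < r" "\<forall>q<r. q \<noteq> p \<longrightarrow> \<not> cng n (t!q) (t!p)" "free n t (t!p + 1)"
  shows "occ n r (t[p := t!p + 1]) = occ n r t"
proof -
  define t' where "t' = t[p := t!p + 1]"
  have e: "res n r t' = insert ((t!p + 1) mod int n) (res n r t - {t!p mod int n})"
  proof
    show "res n r t' \<subseteq> insert ((t!p + 1) mod int n) (res n r t - {t!p mod int n})"
    proof
      fix c assume "c \<in> res n r t'"
      then obtain k where k: "k < r" "c = t'!k mod int n" unfolding res_def by auto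
      show "c \<in> insert ((t!p + 1) mod int n) (res n r t - {t!p mod int n})"
      proof (cases "k = p")
        case True thus ?thesis using k assms(1) by (simp add: t'_def)
      next
        case False
        hence "c = t!k mod int n" "t!k mod int n \<noteq> t!p mod int n" using k assms(1,3) by (auto simp: t'_def cng_def)
        thus ?thesis using k unfolding res_def by auto
      qed
    qed
  next
    show "insert ((t!p + 1) mod int n) (res n r t - {t!p mod int n}) \<subseteq> res n r t'"
    proof
      fix c assume c: "c \<in> insert ((t!p + 1) mod int n) (res n r t - {t!p mod int n})"
      show "c \<in> res n r t'"
      proof (cases "c = (t!p + 1) mod int n")
        case True thus ?thesis using assms(1,2) unfolding res_def t'_def by force
      next
        case False
        then obtain k where k: "k < r" "c = t!k mod int n" "t!k mod int n \<noteq> t!p mod int n"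
          using c unfolding res_def by auto
        hence "k \<noteq> p" by auto
        thus ?thesis using k assms(1) unfolding res_def t'_def by force
      qed
    qed
  qed
  have "(t!p + 1) mod int n \<notin> res n r t" using free_res[OF assms(1)] assms(4) by simp
  moreover have "t!p mod int n \<in> res n r t" using assms(2) unfolding res_def by auto
  moreover have "finite (res n r t)" unfolding res_def by simp
  moreover have "card (res n r t) > 0" using calculation by (auto simp: card_gt_0_iff)
  ultimately show ?thesis unfolding occ_def t'_def[symmetric] e
    by (simp add: card_Diff_singleton)
qed

lemma cng_shift: assumes "1 \<le> k" "k < n" shows "\<not> cng n y (y + int k)"
proof
  assume "cng n y (y + int k)"
  hence "int n dvd (y + int k - y)" unfolding cng_def by (metis mod_eq_dvd_iff)
  hence "int n dvd int k" by simp
  hence "n dvd k" by simp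
  thus False using assms by (simp add: nat_dvd_not_less)
qed

lemma lemC: assumes n2: "n \<ge> 2" and OIH: "\<forall>t'. length t' = r \<longrightarrow> occ n r t' > oc \<longrightarrow> Reach n r t'"
  shows "1 \<le> k \<Longrightarrow> k < n \<Longrightarrow> length t = r \<Longrightarrow> occ n r t = oc \<Longrightarrow> k1 < r \<Longrightarrow> k2 < r \<Longrightarrow> k1 \<noteq> k2 \<Longrightarrow>
    cng n (t!k1) y \<Longrightarrow> cng n (t!k2) y \<Longrightarrow> free n t (y + int k) \<Longrightarrow> Reach n r t"
proof (induction k arbitrary: t)
  case 0 thus ?case by simp
next
  case (Suc k')
  show ?case
  proof (cases "k' = 0")
    case True
    have fr: "free n t (t!k1 + 1)"
      using Suc.prems(10) free_cong[OF cng_add1[OF Suc.prems(8), of 1], of t] True by simp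
    have "cng n (t!k2) (t!k1)" using Suc.prems(8,9) cng_sym cng_trans by metis
    hence "occ n r t < occ n r (t[k1 := t!k1 + 1])"
      using occ_up[OF Suc.prems(3) Suc.prems(5) Suc.prems(6)] Suc.prems(7) fr by auto
    hence "Reach n r (t[k1 := t!k1 + 1])" using OIH Suc.prems(3,4) by simp
    thus ?thesis using move_up[OF n2 _ Suc.prems(3,5) fr] by simp
  next
    case False
    hence k'1: "1 \<le> k'" by simp
    show ?thesis
    proof (cases "free n t (y + int k')")
      case True thus ?thesis using Suc.IH[OF k'1 _ Suc.prems(3-9)] Suc.prems(2) by simp
    next
      case nf: False
      then obtain p where p: "p < r" "cng n (t!p) (y + int k')" using Suc.prems(3) unfolding free_def by auto
      have fr: "free n t (t!p + 1)"
        using Suc.prems(10) free_cong[OF cng_add1[OF p(2), of 1], of t] by (simp add: ac_simps)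
      show ?thesis
      proof (cases "\<exists>q<r. q \<noteq> p \<and> cng n (t!q) (t!p)")
        case True
        then obtain q where "q < r" "q \<noteq> p" "cng n (t!q) (t!p)" by blast
        hence "occ n r t < occ n r (t[p := t!p + 1])"
          using occ_up[OF Suc.prems(3) p(1)] fr by auto
        hence "Reach n r (t[p := t!p + 1])" using OIH Suc.prems(3,4) by simp
        thus ?thesis using move_up[OF n2 _ Suc.prems(3) p(1) fr] by simp
      next
        case False
        define t' where "t' = t[p := t!p + 1]"
        have ns: "\<not> cng n y (y + int k')" using cng_shift[OF k'1] Suc.prems(2) by simp
        have kp1: "k1 \<noteq> p" using ns p(2) Suc.prems(8) cng_sym cng_trans by metis
        have kp2: "k2 \<noteq> p" using ns p(2) Suc.prems(9) cng_sym cng_trans by metis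
        have l: "length t' = r" using Suc.prems(3) by (simp add: t'_def)
        have oc: "occ n r t' = oc" using occ_same[OF Suc.prems(3) p(1)] False fr Suc.prems(4) by (auto simp: t'_def)
        have t1: "t'!k1 = t!k1" "t'!k2 = t!k2" using kp1 kp2 by (auto simp: t'_def)
        have fr': "free n t' (y + int k')"
          unfolding free_def
        proof (intro allI impI)
          fix k assume "k < length t'"
          hence k: "k < r" using l by simp
          show "\<not> cng n (t'!k) (y + int k')"
          proof (cases "k = p")
            case True
            have "cng n (t!p + 1) (y + int k' + 1)" using cng_add1[OF p(2)] .
            moreover have "\<not> cng n (y + int k') (y + int k' + 1)" using cng_step(2)[OF n2 cng_refl] cng_sym by metis
            ultimately show ?thesis using True Suc.prems(3) p(1) cng_trans cng_sym by (metis t'_def nth_list_update_eq)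
          next
            case kf: False
            hence "t'!k = t!k" by (simp add: t'_def)
            thus ?thesis using False kf k p(2) cng_trans cng_sym by metis
          qed
        qed
        have "Reach n r t'"
          using Suc.IH[OF k'1 _ l oc Suc.prems(5-7) _ _ fr'] Suc.prems(2,8,9) t1 by simp
        thus ?thesis using move_up[OF n2 _ Suc.prems(3) p(1) fr] by (simp add: t'_def)
      qed
    qed
  qed
qed

lemma all_reach: assumes "n \<ge> 2" "n > r"
  shows "length t = r \<Longrightarrow> Reach n r t"
proof (induction "r - occ n r t" arbitrary: t rule: less_induct)
  case less
  show ?case
  proof (cases "occ n r t = r")
    case True thus ?thesis using lemA[OF assms less.prems] occ_dist by blast
  next
    case False
    hence lt: "occ n r t < r" using occ_le[of n r t] by simp
    have n0: "n > 0" using assms by simp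
    have "\<not> inj_on (\<lambda>k. t!k mod int n) {..<r}"
      using lt card_image[of "\<lambda>k. t!k mod int n" "{..<r}"] unfolding occ_def res_def by auto
    then obtain k1 k2 where kk: "k1 < r" "k2 < r" "k1 \<noteq> k2" "t!k1 mod int n = t!k2 mod int n"
      unfolding inj_on_def by auto
    define y where "y = t!k1"
    have lt2: "card (res n r t) < card {0..<int n}" using lt assms(2) by (simp add: occ_def)
    have fin: "finite (res n r t)" by (simp add: res_def)
    have "\<not> {0..<int n} \<subseteq> res n r t"
    proof
      assume "{0..<int n} \<subseteq> res n r t"
      hence "card {0..<int n} \<le> card (res n r t)" by (rule card_mono[OF fin])
      thus False using lt2 by simp
    qed
    then obtain c where c: "c \<in> {0..<int n}" "c \<notin> res n r t" by blast
    define k where "k = nat ((c - y) mod int n)"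
    have yk: "(y + int k) mod int n = c"
    proof -
      have "(y + int k) mod int n = (y + (c - y) mod int n) mod int n" using n0 by (simp add: k_def)
      also have "\<dots> = c mod int n" by (simp add: mod_add_right_eq)
      also have "\<dots> = c" using c(1) by simp
      finally show ?thesis .
    qed
    have kn: "k < n" using n0 unfolding k_def by (simp add: nat_less_iff)
    have k1: "1 \<le> k"
    proof (rule ccontr)
      assume "\<not> 1 \<le> k" hence "k = 0" by simp
      hence "c = y mod int n" using yk by simp
      thus False using c(2) kk(1) unfolding res_def y_def by auto
    qed
    have fr: "free n t (y + int k)" using free_res[OF less.prems] c(2) yk by simp
    have OIH: "\<forall>t'. length t' = r \<longrightarrow> occ n r t' > occ n r t \<longrightarrow> Reach n r t'"
    proof (intro allI impI)
      fix t' :: "int list" assume l: "length t' = r" and gt: "occ n r t' > occ n r t"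
      have "occ n r t' \<le> r" by (rule occ_le)
      hence "r - occ n r t' < r - occ n r t" using gt lt by linarith
      thus "Reach n r t'" using less.hyps l by blast
    qed
    show ?thesis
      by (rule lemC[OF assms(1) OIH k1 kn less.prems refl kk(1,2,3)])
        (use kk(4) fr in \<open>auto simp: y_def cng_def\<close>)
  qed
qed



lemma col_delta: assumes "good r N" "length u = r" "length t = r" "\<alpha> \<noteq> 0"
  "\<forall>x. length x = r \<longrightarrow> N x u = (if x = t then \<alpha> else 0)"
  shows "mmul r A N y u = A y t * \<alpha>"
proof -
  have "col r N u = {t}" using assms by (auto simp: col_def split: if_splits)
  thus ?thesis using assms by (simp add: mmul_def)
qed

lemma row_delta: assumes "good r N" "length u = r" "length s = r"
  "\<forall>y. length y = r \<longrightarrow> A u' y = (if y = s then \<beta> else 0)"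
  shows "mmul r A N u' u = \<beta> * N s u"
proof (cases "N s u = 0")
  case True
  have "\<forall>y\<in>col r N u. A u' y * N y u = 0" using assms(4) True by (auto simp: col_def)
  thus ?thesis using True by (auto simp: mmul_def intro!: sum.neutral)
next
  case False
  hence s: "s \<in> col r N u" using assms by (simp add: col_def)
  have "mmul r A N u' u = (\<Sum>y\<in>col r N u. if y = s then \<beta> * N s u else 0)"
    unfolding mmul_def using assms(4) by (intro sum.cong) (auto simp: col_def)
  also have "\<dots> = \<beta> * N s u" using s finite_col[OF assms(1,2)] by (simp add: sum.delta')
  finally show ?thesis .
qed

lemma mat_op_zero_mat: "mat_op r (\<lambda>s t. 0) = (\<lambda>v s. 0)"
  by (auto simp: mat_op_def intro!: ext)

lemma sA_neg: assumes "qalg sA" shows "sA (-1) y = - y"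
proof -
  have z: "sA 0 y = 0"
  proof -
    have "sA (0 + 0) y = sA 0 y + sA 0 y" using assms unfolding qalg_def by blast
    thus ?thesis by simp
  qed
  have "sA (1 + -1) y = sA 1 y + sA (-1) y" using assms unfolding qalg_def by blast
  hence "0 = y + sA (-1) y" using z assms unfolding qalg_def by simp
  thus ?thesis by (simp add: eq_neg_iff_add_eq_0 add.commute)
qed

lemma sA_zero: assumes "qalg sA" shows "sA 0 y = 0"
proof -
  have "sA (0 + 0) y = sA 0 y + sA 0 y" using assms unfolding qalg_def by blast
  thus ?thesis by simp
qed

lemma Wr_len: "Wr n r u \<Longrightarrow> length u = r" by (simp add: Wr_def)

theorem main_inj:
  fixes n r :: nat and sA :: "K \<Rightarrow> 'a::ring_1 \<Rightarrow> 'a" and f :: "op \<Rightarrow> 'a"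
  assumes n2: "n \<ge> 2" and r1: "r \<ge> 1" and nr: "n > r"
    and qa: "qalg sA"
    and hom: "qalg_hom_on (affSchur n r) sA f"
    and inj: "inj_on f {one_r n r \<circ> X \<circ> one_r n r | X. X \<in> affSchur n r}"
    and D: "D \<in> affSchur n r" and fD: "f D = 0"
  shows "D = (\<lambda>v s. 0)"
proof (rule ccontr)
  assume nz: "D \<noteq> (\<lambda>v s. 0)"
  have n0: "n > 0" using n2 by simp
  have fadd: "\<And>X Y. X \<in> affSchur n r \<Longrightarrow> Y \<in> affSchur n r \<Longrightarrow> f (X \<circ> Y) = f X * f Y"
    using hom unfolding qalg_hom_on_def by blast
  obtain M where M: "good r M" "D = mat_op r M" using S_struct[OF n2 D] unfolding SP_def by blast
  have "mat_op r M \<noteq> mat_op r (\<lambda>s t. 0)" using nz M(2) mat_op_zero_mat by metis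
  then obtain s t where st: "length s = r" "length t = r" "M s t \<noteq> 0" unfolding mat_op_eq_iff by blast
  obtain Md u \<alpha> where d: "good r Md" "mat_op r Md \<in> affSchur n r" "Wr n r u" "\<alpha> \<noteq> 0"
      "\<forall>x. length x = r \<longrightarrow> Md x u = (if x = t then \<alpha> else 0)"
    using all_reach[OF n2 nr st(2)] unfolding Reach_def by blast
  obtain Me u' \<beta> where e: "good r Me" "mat_op r Me \<in> affSchur n r" "Wr n r u'" "\<beta> \<noteq> 0"
      "\<forall>x. length x = r \<longrightarrow> Me x u' = (if x = s then \<beta> else 0)"
    using all_reach[OF n2 nr st(1)] unfolding Reach_def by blast
  obtain M1 M1' where m1: "good r M1" "mat_op r Me = mat_op r M1" "good r M1'" "transp r M1' M1"
      "mat_op r M1' \<in> affSchur n r"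
    using S_struct[OF n2 e(2)] unfolding SP_def by blast
  have row: "\<forall>y. length y = r \<longrightarrow> M1' u' y = (if y = s then \<beta> else 0)"
  proof (intro allI impI)
    fix y :: "int list" assume "length y = r"
    hence "M1' u' y = M1 y u'" using m1(4) Wr_len[OF e(3)] by (simp add: transp_def)
    also have "\<dots> = Me y u'" using m1(2) \<open>length y = r\<close> Wr_len[OF e(3)] unfolding mat_op_eq_iff by simp
    finally show "M1' u' y = (if y = s then \<beta> else 0)" using e(5) \<open>length y = r\<close> by simp
  qed
  define W where "W = (\<lambda>s t. if s = t \<and> (\<forall>i\<in>{1..int n}. card {j. j < r \<and> cng n (t ! j) i} = lamr r i) then 1 else (0::K))"
  have one: "one_r n r = mat_op r W" unfolding one_r_eq wtproj_def W_def ..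
  have gW: "good r W" unfolding good_def W_def by (intro exI[of _ 0]) auto
  have dW: "diagm r W" unfolding diagm_def W_def by auto
  have Wu: "W x x = 1" if "Wr n r x" for x using that unfolding Wr_def W_def by auto
  have oneS: "mat_op r W \<in> affSchur n r" using one_r_in[OF n0 r1] one by simp
  define X where "X = mat_op r M1' \<circ> (D \<circ> mat_op r Md)"
  have XS: "X \<in> affSchur n r" unfolding X_def using m1(5) D d(2) by (intro affSchur.mult)
  have fX: "f X = 0" unfolding X_def using fadd m1(5) D d(2) fD affSchur.mult by (simp add: fadd)
  define Z where "Z = one_r n r \<circ> X \<circ> one_r n r"
  have fZ: "f Z = 0"
  proof -
    have "f Z = f (one_r n r \<circ> X) * f (one_r n r)" unfolding Z_def
      using fadd affSchur.mult[OF one_r_in[OF n0 r1] XS] one_r_in[OF n0 r1] by blast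
    also have "f (one_r n r \<circ> X) = f (one_r n r) * f X" using fadd one_r_in[OF n0 r1] XS by blast
    finally show ?thesis using fX by simp
  qed
  define Z0 :: op where "Z0 = (\<lambda>v s. 0)"
  have Z0S: "Z0 \<in> affSchur n r"
  proof -
    have "(\<lambda>v s. (0::K) * psiId r v s) \<in> affSchur n r" by (rule affSchur.smult[OF affSchur.one])
    thus ?thesis by (simp add: Z0_def)
  qed
  have fZ0: "f Z0 = 0"
  proof -
    have "f (\<lambda>v s. (0::K) * psiId r v s) = sA 0 (f (psiId r))"
      using hom affSchur.one unfolding qalg_hom_on_def by blast
    thus ?thesis by (simp add: Z0_def sA_zero[OF qa])
  qed
  have Z0_eq: "one_r n r \<circ> Z0 \<circ> one_r n r = Z0"
    unfolding one Z0_def by (auto simp: mat_op_zero intro!: ext)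
  have "Z = Z0"
  proof (rule inj_onD[OF inj])
    show "f Z = f Z0" using fZ fZ0 by simp
    show "Z \<in> {one_r n r \<circ> X \<circ> one_r n r | X. X \<in> affSchur n r}" unfolding Z_def using XS by blast
    show "Z0 \<in> {one_r n r \<circ> X \<circ> one_r n r | X. X \<in> affSchur n r}" unfolding mem_Collect_eq using Z0S Z0_eq[symmetric] by blast
  qed
  moreover have "Z \<noteq> Z0"
  proof -
    define N1 where "N1 = mmul r Md W"
    define N2 where "N2 = mmul r M N1"
    define N3 where "N3 = mmul r M1' N2"
    define N4 where "N4 = mmul r W N3"
    have g1: "good r N1" unfolding N1_def by (intro good_mmul d(1) gW)
    have g2: "good r N2" unfolding N2_def by (intro good_mmul M(1) g1)
    have g3: "good r N3" unfolding N3_def by (intro good_mmul m1(3) g2)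
    have g4: "good r N4" unfolding N4_def by (intro good_mmul gW g3)
    have lu: "length u = r" and lu': "length u' = r" using Wr_len d(3) e(3) by auto
    have e1: "\<forall>x. length x = r \<longrightarrow> N1 x u = (if x = t then \<alpha> else 0)"
      unfolding N1_def using mmul_diag_right[OF dW _ lu] Wu[OF d(3)] d(5) by simp
    have e2: "N2 s u = M s t * \<alpha>" unfolding N2_def by (rule col_delta[OF g1 lu st(2) d(4) e1])
    have e3: "N3 u' u = \<beta> * N2 s u" unfolding N3_def by (rule row_delta[where A="M1'", OF g2 lu st(1) row])
    have e4: "N4 u' u = N3 u' u" unfolding N4_def using mmul_diag_left[OF dW lu' lu g3] Wu[OF e(3)] by simp
    have nz4: "N4 u' u \<noteq> 0" using e2 e3 e4 st(3) d(4) e(4) by simp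
    have "mat_op r N4 = mat_op r W \<circ> (mat_op r M1' \<circ> (mat_op r M \<circ> (mat_op r Md \<circ> mat_op r W)))"
      unfolding N4_def N3_def N2_def N1_def
      by (simp add: comp_eq good_mmul gW M(1) d(1) m1(3))
    hence "Z = mat_op r N4"
      unfolding Z_def X_def one M(2) by (simp add: comp_assoc)
    moreover have "mat_op r N4 \<noteq> mat_op r (\<lambda>s t. 0)"
      unfolding mat_op_eq_iff using nz4 lu lu' by blast
    ultimately show ?thesis unfolding Z0_def using mat_op_zero_mat by metis
  qed
  ultimately show False by simp
qed


theorem proposition3p9:
  fixes n r :: nat and sA :: "K \<Rightarrow> 'a::ring_1 \<Rightarrow> 'a" and f :: "op \<Rightarrow> 'a"
  assumes "n \<ge> 3" and "r \<ge> 3" and "n > r"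
    and "qalg sA"
    and "qalg_hom_on (affSchur n r) sA f"
    and "f ` affSchur n r = UNIV"
    and "inj_on f {one_r n r \<circ> X \<circ> one_r n r | X. X \<in> affSchur n r}"
  shows "bij_betw f (affSchur n r) UNIV"
proof -
  have n2: "n \<ge> 2" and r1: "r \<ge> 1" using assms(1,2) by auto
  have hadd: "\<forall>X\<in>affSchur n r. \<forall>Y\<in>affSchur n r. f (\<lambda>v s. X v s + Y v s) = f X + f Y"
    and hsm: "\<forall>c. \<forall>X\<in>affSchur n r. f (\<lambda>v s. c * X v s) = sA c (f X)"
    using assms(5) unfolding qalg_hom_on_def by auto
  note key = main_inj[OF n2 r1 assms(3) assms(4) assms(5) assms(7)]
  have "inj_on f (affSchur n r)"
  proof (rule inj_onI)
    fix X Y assume X: "X \<in> affSchur n r" and Y: "Y \<in> affSchur n r" and fXY: "f X = f Y"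
    define Y' where "Y' = (\<lambda>v s. (-1::K) * Y v s)"
    have Y'S: "Y' \<in> affSchur n r" unfolding Y'_def by (rule affSchur.smult[OF Y])
    have "f Y' = sA (-1) (f Y)" unfolding Y'_def by (rule hsm[rule_format, OF Y])
    hence fY': "f Y' = - f Y" using sA_neg[OF assms(4)] by simp
    define D where "D = (\<lambda>v s. X v s + Y' v s)"
    have DS: "D \<in> affSchur n r" unfolding D_def by (rule affSchur.add[OF X Y'S])
    have "f D = f X + f Y'" unfolding D_def by (rule hadd[rule_format, OF X Y'S])
    hence fD: "f D = 0" using fY' fXY by simp
    have "D = (\<lambda>v s. 0)" by (rule key[OF DS fD])
    hence h: "D v s = 0" for v s by simp
    have "X v s = Y v s" for v s
    proof -
      have "X v s + (-1) * Y v s = 0" using h[of v s] by (simp add: D_def Y'_def)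
      thus ?thesis by (simp add: algebra_simps)
    qed
    thus "X = Y" by (intro ext)
  qed
  thus ?thesis using assms(6) unfolding bij_betw_def by blast
qed

end
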